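(* In the finite element setting described in the context (linear hexahedral elements for 3D elasticity, $m=24$), let $\beta\ge 0$ and, for each element $e$ with mass $m_e>0$, $$M_e=I_3\otimes \mathrm{M}_e,\quad \mathrm{M}_e=\frac{m_e}{8}I_8,\qquad E_e=I_3\otimes \mathrm{E}_e,\quad \mathrm{E}_e=\frac{\beta m_e}{56}\bigl(8I_8-\mathbf{e}\mathbf{e}^T\bigr),$$ where $\mathbf{e}\in\mathbb{R}^8$ is the vector of all ones (so $\mathrm{E}_e$ has diagonal entries $7\beta m_e/56$ and off-diagonal entries $-\beta m_e/56$), and $\overline{M}_e=M_e+E_e$. Let $M=\sum_eL_e^TM_eL_e$ and $\overline{M}=\sum_eL_e^T\overline{M}_eL_e$. Then for all $i=1,\dots,n$, $$1\le\frac{\omega_i}{\overline{\omega}_i}\le\sqrt{1+\tfrac{8}{7}\beta},\qquad \frac{\kappa(\overline{M})}{\kappa(M)}\le 1+\tfrac{8}{7}\beta,$$ where $\omega_i=\sqrt{\lambda_i(K,M)}$, $\overline{\omega}_i=\sqrt{\lambda_i(K,\overline{M})}$.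
   Context: Finite element setting: there are $n$ global degrees of freedom and $N$ elements, each with $m$ local degrees of freedom. For each element $e$, $L_e\in\mathbb{R}^{m\times n}$ satisfies $L_e^T=[\mathbf{e}_{i_1},\dots,\mathbf{e}_{i_m}]$ for distinct indices $i_1,\dots,i_m$ (columns of $I_n$), and every global index appears for at least one element. Element matrices are assembled as $A=\sum_{e=1}^N L_e^TA_eL_e$. The global stiffness matrix is $K=\sum_e L_e^TK_eL_e$ with each $K_e$ symmetric positive semidefinite, and $K$ is assumed symmetric positive definite. Generalized eigenvalues of a pair are numbered in ascending order. For a symmetric positive definite matrix $A$, $\kappa(A)=\lambda_{\max}(A)/\lambda_{\min}(A)$. $\otimes$ is the Kronecker product. *)

theory Defs
  imports "Jordan_Normal_Form.Spectral_Radius" "HOL-Library.Multiset"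
begin

definition sym_psd :: "nat \<Rightarrow> real mat \<Rightarrow> bool" where
  "sym_psd k A \<longleftrightarrow> A \<in> carrier_mat k k \<and> transpose_mat A = A \<and>
     (\<forall>v \<in> carrier_vec k. 0 \<le> v \<bullet> (A *\<^sub>v v))"

definition sym_pd :: "nat \<Rightarrow> real mat \<Rightarrow> bool" where
  "sym_pd k A \<longleftrightarrow> A \<in> carrier_mat k k \<and> transpose_mat A = A \<and>
     (\<forall>v \<in> carrier_vec k. v \<noteq> 0\<^sub>v k \<longrightarrow> 0 < v \<bullet> (A *\<^sub>v v))"

definition kron :: "real mat \<Rightarrow> real mat \<Rightarrow> real mat" where
  "kron A B = mat (dim_row A * dim_row B) (dim_col A * dim_col B)
     (\<lambda>(i,j). A $$ (i div dim_row B, j div dim_col B) * B $$ (i mod dim_row B, j mod dim_col B))"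

definition bool_mat :: "nat \<Rightarrow> nat \<Rightarrow> (nat \<Rightarrow> nat) \<Rightarrow> real mat" where
  "bool_mat m n idx = mat m n (\<lambda>(k,j). if j = idx k then 1 else 0)"

definition assemble :: "nat \<Rightarrow> nat \<Rightarrow> (nat \<Rightarrow> real mat) \<Rightarrow> (nat \<Rightarrow> real mat) \<Rightarrow> real mat" where
  "assemble n N L A = mat n n (\<lambda>(i,j). \<Sum>e<N. (transpose_mat (L e) * A e * L e) $$ (i,j))"

text \<open>Generalized eigenvalues of the pair (K,M): roots of det(lambda M - K), with multiplicity,
  in ascending order; gen_eig K M i is the i-th one (1-based).\<close>
definition gen_char_poly :: "real mat \<Rightarrow> real mat \<Rightarrow> real poly" where
  "gen_char_poly K M = det (map_mat (\<lambda>b. [:0, b:]) M + map_mat (\<lambda>a. [:- a:]) K)"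

definition gen_eig :: "real mat \<Rightarrow> real mat \<Rightarrow> nat \<Rightarrow> real" where
  "gen_eig K M i = sorted_list_of_multiset (proots (gen_char_poly K M)) ! (i - 1)"

definition cond :: "real mat \<Rightarrow> real" where
  "cond A = Max (spectrum A) / Min (spectrum A)"

end

theory Submission
  imports Defs
begin



lemma kernel_nonzero:
  fixes C :: "'a :: field mat"
  assumes C: "C \<in> carrier_mat r c" and rc: "r < c"
  shows "\<exists>x \<in> carrier_vec c. x \<noteq> 0\<^sub>v c \<and> C *\<^sub>v x = 0\<^sub>v r"
proof -
  define C' where "C' = mat c c (\<lambda>(i,j). if i < r then C $$ (i,j) else 0)"
  have C': "C' \<in> carrier_mat c c" unfolding C'_def by auto
  have "C' = mat\<^sub>r c c (\<lambda>i. if i = c - 1 then 0\<^sub>v c else row C' i)"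
    by (rule eq_matI, insert rc C, auto simp: C'_def)
  also have "det \<dots> = 0"
    by (rule det_row_0, insert rc C', auto)
  finally have "det C' = 0" .
  from this[unfolded det_0_iff_vec_prod_zero_field[OF C']] obtain x where
    x: "x \<in> carrier_vec c" "x \<noteq> 0\<^sub>v c" "C' *\<^sub>v x = 0\<^sub>v c" by auto
  have "C *\<^sub>v x = 0\<^sub>v r"
  proof (rule eq_vecI)
    fix i assume i: "i < dim_vec (0\<^sub>v r :: 'a vec)"
    hence ic: "i < c" using rc by auto
    have "(C' *\<^sub>v x) $ i = 0\<^sub>v c $ i" using x(3) by simp
    hence "(C' *\<^sub>v x) $ i = 0" using ic by simp
    moreover have "(C' *\<^sub>v x) $ i = (C *\<^sub>v x) $ i"
      using i rc C x(1) by (auto simp: C'_def scalar_prod_def intro!: sum.cong)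
    ultimately show "(C *\<^sub>v x) $ i = 0\<^sub>v r $ i" using i by auto
  qed (insert C, auto)
  with x show ?thesis by auto
qed

lemma pd_det_nonzero:
  assumes A: "sym_pd n A"
  shows "det A \<noteq> 0"
proof
  assume "det A = 0"
  moreover have Ac: "A \<in> carrier_mat n n" using A by (auto simp: sym_pd_def)
  ultimately obtain v where
    v: "v \<in> carrier_vec n" "v \<noteq> 0\<^sub>v n" "A *\<^sub>v v = 0\<^sub>v n" 
    using det_0_iff_vec_prod_zero_field[OF Ac] by auto
  with A have "0 < v \<bullet> (A *\<^sub>v v)" by (auto simp: sym_pd_def)
  with v show False by auto
qed

lemma pd_inverse:
  assumes A: "sym_pd n A"
  shows "\<exists>B \<in> carrier_mat n n. B * A = 1\<^sub>m n \<and> A * B = 1\<^sub>m n"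
proof -
  have Ac: "A \<in> carrier_mat n n" using A by (auto simp: sym_pd_def)
  from det_non_zero_imp_unit[OF Ac pd_det_nonzero[OF A], of "()"]
  show ?thesis unfolding Units_def ring_mat_def by auto
qed

lemma sym_scalar:
  fixes A :: "'a :: comm_ring_1 mat"
  assumes A: "A \<in> carrier_mat n n" and S: "transpose_mat A = A"
    and x: "x \<in> carrier_vec n" and y: "y \<in> carrier_vec n"
  shows "x \<bullet> (A *\<^sub>v y) = y \<bullet> (A *\<^sub>v x)"
proof -
  have "x \<bullet> (A *\<^sub>v y) = (transpose_mat A *\<^sub>v x) \<bullet> y"
    using transpose_vec_mult_scalar[of A n n y x] A x y by auto
  also have "\<dots> = y \<bullet> (A *\<^sub>v x)" using S A x y by (simp add: comm_scalar_prod[of _ n])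
  finally show ?thesis .
qed




lemma smult_vec_zero_cancel:
  fixes x :: "'a :: field vec"
  assumes "c \<cdot>\<^sub>v x = 0\<^sub>v n" "c \<noteq> 0" "x \<in> carrier_vec n"
  shows "x = 0\<^sub>v n"
proof (rule eq_vecI)
  fix i assume i: "i < dim_vec (0\<^sub>v n :: 'a vec)"
  have "(c \<cdot>\<^sub>v x) $ i = 0" using assms(1) i by simp
  hence "c * x $ i = 0" using i assms(3) by simp
  thus "x $ i = 0\<^sub>v n $ i" using assms(2) i by simp
qed (insert assms, auto)

section \<open>Evaluating polynomials of a matrix on vectors\<close>

fun evl :: "complex mat \<Rightarrow> nat \<Rightarrow> complex list \<Rightarrow> complex vec \<Rightarrow> complex vec" where
  "evl T n [] u = 0\<^sub>v n"
| "evl T n (a # as) u = a \<cdot>\<^sub>v u + T *\<^sub>v evl T n as u"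

definition ev :: "complex mat \<Rightarrow> nat \<Rightarrow> complex poly \<Rightarrow> complex vec \<Rightarrow> complex vec" where
  "ev T n p u = evl T n (coeffs p) u"

context
  fixes T :: "complex mat" and n :: nat
  assumes T: "T \<in> carrier_mat n n"
begin

lemma evl_carrier[simp]: "u \<in> carrier_vec n \<Longrightarrow> evl T n as u \<in> carrier_vec n"
  by (induct as, insert T, auto)

lemma ev_carrier[simp]: "u \<in> carrier_vec n \<Longrightarrow> ev T n p u \<in> carrier_vec n"
  unfolding ev_def by simp

lemma ev_dim[simp]: "u \<in> carrier_vec n \<Longrightarrow> dim_vec (ev T n p u) = n"
  using ev_carrier[of u p] by auto

lemma T0[simp]: "T *\<^sub>v 0\<^sub>v n = 0\<^sub>v n"
  by (rule eq_vecI, insert T, auto)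

lemma ev_0[simp]: "ev T n 0 u = 0\<^sub>v n" unfolding ev_def by simp

lemma ev_pCons: assumes u: "u \<in> carrier_vec n"
  shows "ev T n (pCons a p) u = a \<cdot>\<^sub>v u + T *\<^sub>v ev T n p u"
proof (cases "p = 0 \<and> a = 0")
  case True
  then show ?thesis using u T by (auto simp: ev_def)
next
  case False
  hence "coeffs (pCons a p) = a # coeffs p" by (auto simp: coeffs_pCons_eq_cCons cCons_def)
  then show ?thesis unfolding ev_def by simp
qed

lemma ev_index: assumes u: "u \<in> carrier_vec n" and i: "i < n"
  shows "ev T n (pCons a p) u $ i = a * u $ i + row T i \<bullet> ev T n p u"
  unfolding ev_pCons[OF u] using u i T by simp

lemma ev_add: assumes u: "u \<in> carrier_vec n"
  shows "ev T n (p + q) u = ev T n p u + ev T n q u"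
proof (induct p arbitrary: q rule: pCons_induct)
  case 0
  then show ?case using u by simp
next
  case (pCons a p q)
  obtain b q' where q: "q = pCons b q'" by (cases q, auto)
  show ?case
  proof (rule eq_vecI)
    fix i assume "i < dim_vec (ev T n (pCons a p) u + ev T n q u)"
    hence i: "i < n" using u by simp
    show "ev T n (pCons a p + q) u $ i = (ev T n (pCons a p) u + ev T n q u) $ i"
      unfolding q add_pCons
      using i u T pCons(2)[of q'] 
      by (simp add: ev_index scalar_prod_add_distrib[of _ n] algebra_simps)
  qed (insert u, auto)
qed

lemma ev_smult: assumes u: "u \<in> carrier_vec n"
  shows "ev T n (Polynomial.smult c p) u = c \<cdot>\<^sub>v ev T n p u"
proof (induct p rule: pCons_induct)
  case 0
  then show ?case using u by auto
next
  case (pCons a p)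
  show ?case
  proof (rule eq_vecI)
    fix i assume "i < dim_vec (c \<cdot>\<^sub>v ev T n (pCons a p) u)"
    hence i: "i < n" using u by simp
    show "ev T n (Polynomial.smult c (pCons a p)) u $ i = (c \<cdot>\<^sub>v ev T n (pCons a p) u) $ i"
      using i u T pCons(2)
      by (simp add: ev_index algebra_simps)
  qed (insert u, auto)
qed

lemma ev_mult: assumes u: "u \<in> carrier_vec n"
  shows "ev T n (p * q) u = ev T n p (ev T n q u)"
proof (induct p rule: pCons_induct)
  case 0
  then show ?case using u by auto
next
  case (pCons a p)
  have qu: "ev T n q u \<in> carrier_vec n" using u by simp
  show ?case
  proof (rule eq_vecI)
    fix i assume "i < dim_vec (ev T n (pCons a p) (ev T n q u))"
    hence i: "i < n" using qu by simp
    show "ev T n (pCons a p * q) u $ i = ev T n (pCons a p) (ev T n q u) $ i"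
      unfolding mult_pCons_left ev_add[OF u] ev_smult[OF u]
      using i u T pCons(2) qu
      by (simp add: ev_index ev_pCons)
  qed (insert u, auto)
qed

lemma ev_one: assumes u: "u \<in> carrier_vec n" shows "ev T n 1 u = u"
  unfolding one_pCons ev_pCons[OF u] using u T by simp

lemma ev_linear: assumes u: "u \<in> carrier_vec n"
  shows "ev T n [:- z, 1:] u = T *\<^sub>v u - z \<cdot>\<^sub>v u"
  unfolding ev_pCons[OF u] ev_one[OF u] using u T
  by (intro eq_vecI, auto)

lemma ev_monom_Suc: assumes u: "u \<in> carrier_vec n"
  shows "ev T n (monom 1 (Suc k)) u = T *\<^sub>v ev T n (monom 1 k) u"
  unfolding monom_Suc ev_pCons[OF u] using u T by (intro eq_vecI, auto)

lemma ev_Poly: assumes u: "u \<in> carrier_vec n" and i: "i < n"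
  shows "ev T n (Poly cs) u $ i = (\<Sum>k<length cs. cs ! k * ev T n (monom 1 k) u $ i)"
  using i
proof (induct cs arbitrary: i)
  case Nil
  then show ?case by simp
next
  case (Cons a cs i)
  have "ev T n (Poly (a # cs)) u $ i = a * u $ i + row T i \<bullet> ev T n (Poly cs) u"
    using ev_index[OF u Cons(2)] by simp
  also have "row T i \<bullet> ev T n (Poly cs) u = (\<Sum>j<n. T $$ (i,j) * ev T n (Poly cs) u $ j)"
    using T u Cons(2) by (auto simp: scalar_prod_def lessThan_atLeast0)
  also have "\<dots> = (\<Sum>j<n. T $$ (i,j) * (\<Sum>k<length cs. cs ! k * ev T n (monom 1 k) u $ j))"
    using Cons(1) by simp
  also have "\<dots> = (\<Sum>k<length cs. cs ! k * (\<Sum>j<n. T $$ (i,j) * ev T n (monom 1 k) u $ j))"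
    by (simp add: sum_distrib_left sum_distrib_right algebra_simps sum.swap[of _ "{..<n}"])
  also have "\<dots> = (\<Sum>k<length cs. cs ! k * ev T n (monom 1 (Suc k)) u $ i)"
    unfolding ev_monom_Suc[OF u] using T u Cons(2) 
    by (intro sum.cong refl, auto simp: scalar_prod_def lessThan_atLeast0)
  finally have "ev T n (Poly (a # cs)) u $ i = 
     a * u $ i + (\<Sum>k<length cs. cs ! k * ev T n (monom 1 (Suc k)) u $ i)" .
  moreover have "ev T n (monom 1 0) u = u" using ev_one[OF u] by (simp add: one_pCons monom_0)
  ultimately show ?case
    unfolding length_Cons sum.lessThan_Suc_shift by simp
qed

lemma ev_closed:
  assumes S: "S \<subseteq> carrier_vec n" and S0: "0\<^sub>v n \<in> S"
    and ST: "\<And>x. x \<in> S \<Longrightarrow> T *\<^sub>v x \<in> S"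
    and Ss: "\<And>x c. x \<in> S \<Longrightarrow> c \<cdot>\<^sub>v x \<in> S"
    and Sa: "\<And>x y. x \<in> S \<Longrightarrow> y \<in> S \<Longrightarrow> x + y \<in> S"
    and u: "u \<in> S"
  shows "ev T n p u \<in> S"
proof (induct p rule: pCons_induct)
  case 0
  then show ?case using S0 by simp
next
  case (pCons a p)
  have uc: "u \<in> carrier_vec n" using u S by auto
  show ?case unfolding ev_pCons[OF uc] by (intro Sa Ss ST u pCons(2))
qed

lemma ev_descent:
  assumes S: "S \<subseteq> carrier_vec n" and S0: "0\<^sub>v n \<in> S"
    and ST: "\<And>x. x \<in> S \<Longrightarrow> T *\<^sub>v x \<in> S"
    and Ss: "\<And>x c. x \<in> S \<Longrightarrow> c \<cdot>\<^sub>v x \<in> S"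
    and Sa: "\<And>x y. x \<in> S \<Longrightarrow> y \<in> S \<Longrightarrow> x + y \<in> S"
  shows "u \<in> S \<Longrightarrow> u \<noteq> 0\<^sub>v n \<Longrightarrow> ev T n (\<Prod>z\<leftarrow>zs. [:- z, 1:]) u = 0\<^sub>v n \<Longrightarrow>
    \<exists>y z. y \<in> S \<and> y \<noteq> 0\<^sub>v n \<and> T *\<^sub>v y = z \<cdot>\<^sub>v y"
proof (induct zs)
  case Nil
  then show ?case using ev_one[of u] S by auto
next
  case (Cons z zs)
  have uc: "u \<in> carrier_vec n" using Cons S by auto
  define y where "y = ev T n (\<Prod>z\<leftarrow>zs. [:- z, 1:]) u"
  have yS: "y \<in> S" unfolding y_def by (rule ev_closed[OF S S0 ST Ss Sa Cons(2)])
  have yc: "y \<in> carrier_vec n" using yS S by auto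
  show ?case
  proof (cases "y = 0\<^sub>v n")
    case True
    then show ?thesis using Cons unfolding y_def by auto
  next
    case False
    have "ev T n [:- z, 1:] y = ev T n (\<Prod>z\<leftarrow>z#zs. [:- z, 1:]) u"
      unfolding y_def ev_mult[OF uc, symmetric] by (simp only: list.map prod_list.Cons)
    hence "ev T n [:- z, 1:] y = 0\<^sub>v n" using Cons(4) by simp
    hence "T *\<^sub>v y - z \<cdot>\<^sub>v y = 0\<^sub>v n" unfolding ev_linear[OF yc] .
    hence "T *\<^sub>v y = z \<cdot>\<^sub>v y"
    proof (intro eq_vecI)
      fix i assume "i < dim_vec (z \<cdot>\<^sub>v y)" 
      hence i: "i < n" using yc by auto
      assume "T *\<^sub>v y - z \<cdot>\<^sub>v y = 0\<^sub>v n"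
      hence "(T *\<^sub>v y - z \<cdot>\<^sub>v y) $ i = 0" using i by simp
      thus "(T *\<^sub>v y) $ i = (z \<cdot>\<^sub>v y) $ i" using i yc T by simp
    qed (insert yc T, auto)
    thus ?thesis using yS False by blast
  qed
qed

lemma invariant_eigvec:
  assumes S: "S \<subseteq> carrier_vec n" and S0: "0\<^sub>v n \<in> S"
    and ST: "\<And>x. x \<in> S \<Longrightarrow> T *\<^sub>v x \<in> S"
    and Ss: "\<And>x c. x \<in> S \<Longrightarrow> c \<cdot>\<^sub>v x \<in> S"
    and Sa: "\<And>x y. x \<in> S \<Longrightarrow> y \<in> S \<Longrightarrow> x + y \<in> S"
    and w: "w \<in> S" "w \<noteq> 0\<^sub>v n"
  shows "\<exists>y z. y \<in> S \<and> y \<noteq> 0\<^sub>v n \<and> T *\<^sub>v y = z \<cdot>\<^sub>v y"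
proof -
  have wc: "w \<in> carrier_vec n" using w S by auto
  define Kr where "Kr = mat n (Suc n) (\<lambda>(i,k). ev T n (monom 1 k) w $ i)"
  have Kr: "Kr \<in> carrier_mat n (Suc n)" unfolding Kr_def by auto
  from kernel_nonzero[OF Kr] obtain c where
    c: "c \<in> carrier_vec (Suc n)" "c \<noteq> 0\<^sub>v (Suc n)" "Kr *\<^sub>v c = 0\<^sub>v n" by auto
  define cs where "cs = list_of_vec c"
  have lcs: "length cs = Suc n" using c unfolding cs_def by auto
  define p where "p = Poly cs"
  have evp: "ev T n p w = 0\<^sub>v n"
  proof (rule eq_vecI)
    fix i assume "i < dim_vec (0\<^sub>v n :: complex vec)"
    hence i: "i < n" by simp
    have "ev T n p w $ i = (\<Sum>k<Suc n. c $ k * ev T n (monom 1 k) w $ i)"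
      unfolding p_def ev_Poly[OF wc i] lcs using c(1) by (auto simp: cs_def)
    also have "\<dots> = (Kr *\<^sub>v c) $ i" using i c(1)
      by (auto simp: Kr_def scalar_prod_def lessThan_atLeast0 mult.commute intro!: sum.cong)
    also have "\<dots> = 0" using c(3) i by simp
    finally show "ev T n p w $ i = 0\<^sub>v n $ i" using i by simp
  qed (insert wc, auto)
  have p0: "p \<noteq> 0"
  proof
    assume "p = 0"
    then obtain m where "cs = replicate m 0" unfolding p_def Poly_eq_0 by auto
    hence "c = 0\<^sub>v (Suc n)"
    proof (intro eq_vecI)
      fix i assume "i < dim_vec (0\<^sub>v (Suc n) :: complex vec)" and cs: "cs = replicate m 0"
      hence i: "i < Suc n" by simp
      have "c $ i = cs ! i" unfolding cs_def using i c(1) by simp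
      also have "\<dots> = 0" using cs i lcs by (simp del: replicate_Suc)
      finally show "c $ i = 0\<^sub>v (Suc n) $ i" using i by simp
    qed (insert c(1), auto)
    with c(2) show False by simp
  qed
  obtain zs where fact: "Polynomial.smult (lead_coeff p) (\<Prod>z\<leftarrow>zs. [:- z, 1:]) = p"
    using fundamental_theorem_algebra_factorized[of p] by auto
  have lc: "lead_coeff p \<cdot>\<^sub>v ev T n (\<Prod>z\<leftarrow>zs. [:- z, 1:]) w = 0\<^sub>v n"
    using evp unfolding ev_smult[OF wc, symmetric] fact .
  have "ev T n (\<Prod>z\<leftarrow>zs. [:- z, 1:]) w = 0\<^sub>v n"
    by (rule smult_vec_zero_cancel[OF lc]) (insert p0 wc, auto)
  from ev_descent[OF S S0 ST Ss Sa w this] show ?thesis .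
qed

end




abbreviation cV :: "real vec \<Rightarrow> complex vec" where "cV \<equiv> map_vec complex_of_real"
abbreviation cM :: "real mat \<Rightarrow> complex mat" where "cM \<equiv> map_mat complex_of_real"

lemma Re_scalar: assumes "f \<in> carrier_vec n" "y \<in> carrier_vec n"
  shows "Re (cV f \<bullet> y) = f \<bullet> map_vec Re y"
  using assms by (simp add: scalar_prod_def Re_sum)

lemma Im_scalar: assumes "f \<in> carrier_vec n" "y \<in> carrier_vec n"
  shows "Im (cV f \<bullet> y) = f \<bullet> map_vec Im y"
  using assms by (simp add: scalar_prod_def Im_sum)

lemma Re_mult_mat_vec: assumes "T \<in> carrier_mat n n" "y \<in> carrier_vec n"
  shows "map_vec Re (cM T *\<^sub>v y) = T *\<^sub>v map_vec Re y"
proof (rule eq_vecI)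
  fix i assume "i < dim_vec (T *\<^sub>v map_vec Re y)"
  hence i: "i < n" using assms by auto
  have r: "row (cM T) i = cV (row T i)" by (rule eq_vecI, insert i assms, auto)
  show "map_vec Re (cM T *\<^sub>v y) $ i = (T *\<^sub>v map_vec Re y) $ i"
    using i assms Re_scalar[of "row T i" n y] r by auto
qed (insert assms, auto)

lemma Im_mult_mat_vec: assumes "T \<in> carrier_mat n n" "y \<in> carrier_vec n"
  shows "map_vec Im (cM T *\<^sub>v y) = T *\<^sub>v map_vec Im y"
proof (rule eq_vecI)
  fix i assume "i < dim_vec (T *\<^sub>v map_vec Im y)"
  hence i: "i < n" using assms by auto
  have r: "row (cM T) i = cV (row T i)" by (rule eq_vecI, insert i assms, auto)
  show "map_vec Im (cM T *\<^sub>v y) $ i = (T *\<^sub>v map_vec Im y) $ i"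
    using i assms Im_scalar[of "row T i" n y] r by auto
qed (insert assms, auto)

lemma cV_scalar: assumes "dim_vec y = dim_vec x" 
  shows "cV x \<bullet> cV y = complex_of_real (x \<bullet> y)"
  using assms unfolding scalar_prod_def by (simp add: of_real_sum)

definition eigsys :: "nat \<Rightarrow> real mat \<Rightarrow> real mat \<Rightarrow> nat \<Rightarrow> (nat \<Rightarrow> real vec) \<Rightarrow> (nat \<Rightarrow> real) \<Rightarrow> bool" where
  "eigsys n K A k v l \<longleftrightarrow> (\<forall>j<k. v j \<in> carrier_vec n \<and> K *\<^sub>v v j = l j \<cdot>\<^sub>v (A *\<^sub>v v j)) \<and>
     (\<forall>i<k. \<forall>j<k. v i \<bullet> (A *\<^sub>v v j) = (if i = j then 1 else 0))"

lemma step_eigvec: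
  assumes K: "K \<in> carrier_mat n n" "transpose_mat K = K"
    and A: "sym_pd n A"
    and es: "eigsys n K A k v l" and kn: "k < n"
  shows "\<exists>x \<mu>. x \<in> carrier_vec n \<and> x \<noteq> 0\<^sub>v n \<and> K *\<^sub>v x = \<mu> \<cdot>\<^sub>v (A *\<^sub>v x) \<and>
     (\<forall>j<k. (A *\<^sub>v v j) \<bullet> x = 0)"
proof -
  have Ac: "A \<in> carrier_mat n n" and As: "transpose_mat A = A"
    and Apd: "\<And>x. x \<in> carrier_vec n \<Longrightarrow> x \<noteq> 0\<^sub>v n \<Longrightarrow> 0 < x \<bullet> (A *\<^sub>v x)"
    using A by (auto simp: sym_pd_def)
  from pd_inverse[OF A] obtain B where B: "B \<in> carrier_mat n n" "A * B = 1\<^sub>m n" by auto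
  define T where "T = B * K"
  have Tc: "T \<in> carrier_mat n n" unfolding T_def using B K by auto
  have AT: "A * T = K" unfolding T_def using B K Ac
    by (metis assoc_mult_mat left_mult_one_mat)
  have vc: "\<And>j. j < k \<Longrightarrow> v j \<in> carrier_vec n" using es by (auto simp: eigsys_def)
  have vK: "\<And>j. j < k \<Longrightarrow> K *\<^sub>v v j = l j \<cdot>\<^sub>v (A *\<^sub>v v j)" using es by (auto simp: eigsys_def)
  define f where "f j = cV (A *\<^sub>v v j)" for j
  have fc: "\<And>j. j < k \<Longrightarrow> f j \<in> carrier_vec n" unfolding f_def using vc Ac by auto
  have ATc: "cM A * cM T = cM K" using of_real_hom.mat_hom_mult[OF Ac Tc, symmetric] AT by simp
  have cAs: "transpose_mat (cM A) = cM A" using As by (metis map_mat_transpose)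
  have cKs: "transpose_mat (cM K) = cM K" using K by (metis map_mat_transpose)
  have cAc: "cM A \<in> carrier_mat n n" using Ac by auto
  have cKc: "cM K \<in> carrier_mat n n" using K by auto
  have cTc: "cM T \<in> carrier_mat n n" using Tc by auto
  have cvK: "cM K *\<^sub>v cV (v j) = complex_of_real (l j) \<cdot>\<^sub>v (cM A *\<^sub>v cV (v j))" if j: "j < k" for j
  proof -
    have "cM K *\<^sub>v cV (v j) = cV (K *\<^sub>v v j)" by (rule of_real_hom.mult_mat_vec_hom[OF K(1) vc[OF j], symmetric])
    also have "\<dots> = cV (l j \<cdot>\<^sub>v (A *\<^sub>v v j))" using vK[OF j] by simp
    also have "\<dots> = complex_of_real (l j) \<cdot>\<^sub>v cV (A *\<^sub>v v j)" by (rule eq_vecI, auto)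
    also have "cV (A *\<^sub>v v j) = cM A *\<^sub>v cV (v j)" by (rule of_real_hom.mult_mat_vec_hom[OF Ac vc[OF j]])
    finally show ?thesis .
  qed
  have fA: "f j = cM A *\<^sub>v cV (v j)" if j: "j < k" for j
    unfolding f_def by (rule of_real_hom.mult_mat_vec_hom[OF Ac vc[OF j]])
  have inv: "f j \<bullet> (cM T *\<^sub>v x) = complex_of_real (l j) * (f j \<bullet> x)"
    if j: "j < k" and x: "x \<in> carrier_vec n" for j x
  proof -
    have cv: "cV (v j) \<in> carrier_vec n" using vc[OF j] by auto
    have Tx: "cM T *\<^sub>v x \<in> carrier_vec n" using cTc x by auto
    have "f j \<bullet> (cM T *\<^sub>v x) = (cM T *\<^sub>v x) \<bullet> (cM A *\<^sub>v cV (v j))"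
      unfolding fA[OF j] using cv Tx cAc by (simp add: comm_scalar_prod[of _ n])
    also have "\<dots> = cV (v j) \<bullet> (cM A *\<^sub>v (cM T *\<^sub>v x))"
      using sym_scalar[OF cAc cAs Tx cv] by simp
    also have "cM A *\<^sub>v (cM T *\<^sub>v x) = cM K *\<^sub>v x" using ATc cAc cTc x
      by (metis assoc_mult_mat_vec)
    also have "cV (v j) \<bullet> (cM K *\<^sub>v x) = x \<bullet> (cM K *\<^sub>v cV (v j))"
      using sym_scalar[OF cKc cKs cv x] by simp
    also have "\<dots> = complex_of_real (l j) * (x \<bullet> (cM A *\<^sub>v cV (v j)))"
      unfolding cvK[OF j] using x cv cAc by simp
    also have "x \<bullet> (cM A *\<^sub>v cV (v j)) = f j \<bullet> x"
      unfolding fA[OF j] using x cv cAc by (simp add: comm_scalar_prod[of _ n])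
    finally show ?thesis .
  qed
  define S where "S = {u \<in> carrier_vec n. \<forall>j<k. f j \<bullet> u = 0}"
  have S: "S \<subseteq> carrier_vec n" unfolding S_def by auto
  have S0: "0\<^sub>v n \<in> S" unfolding S_def using fc by auto
  have ST: "cM T *\<^sub>v x \<in> S" if "x \<in> S" for x
    using that inv cTc unfolding S_def by auto
  have Ss: "c \<cdot>\<^sub>v x \<in> S" if "x \<in> S" for x c
    using that fc unfolding S_def by auto
  have Sa: "x + y \<in> S" if "x \<in> S" "y \<in> S" for x y
    using that fc unfolding S_def by (auto simp: scalar_prod_add_distrib[of _ n])
  define C where "C = mat k n (\<lambda>(j,i). (A *\<^sub>v v j) $ i)"
  have Cc: "C \<in> carrier_mat k n" unfolding C_def by auto
  from kernel_nonzero[OF Cc kn] obtain w where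
    w: "w \<in> carrier_vec n" "w \<noteq> 0\<^sub>v n" "C *\<^sub>v w = 0\<^sub>v k" by auto
  have wperp: "(A *\<^sub>v v j) \<bullet> w = 0" if j: "j < k" for j
  proof -
    have "(C *\<^sub>v w) $ j = 0" using w(3) j by simp
    moreover have "(C *\<^sub>v w) $ j = (A *\<^sub>v v j) \<bullet> w"
      using j w(1) Ac by (auto simp: C_def scalar_prod_def)
    ultimately show ?thesis by simp
  qed
  have wS: "cV w \<in> S" unfolding S_def f_def using w(1) wperp Ac vc
    by (auto simp: cV_scalar)
  have w0: "cV w \<noteq> 0\<^sub>v n"
  proof
    assume "cV w = 0\<^sub>v n"
    hence "w = 0\<^sub>v n"
    proof (intro eq_vecI)
      fix i assume h: "cV w = 0\<^sub>v n" and "i < dim_vec (0\<^sub>v n :: real vec)"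
      hence i: "i < n" by simp
      have "cV w $ i = 0" using h i by simp
      thus "w $ i = 0\<^sub>v n $ i" using i w(1) by simp
    qed (insert w(1), auto)
    with w(2) show False by simp
  qed
  from invariant_eigvec[OF cTc S S0 ST Ss Sa wS w0] obtain y z where
    y: "y \<in> S" "y \<noteq> 0\<^sub>v n" "cM T *\<^sub>v y = z \<cdot>\<^sub>v y" by blast
  have yc: "y \<in> carrier_vec n" using y S by auto
  define a where "a = map_vec Re y"
  define b where "b = map_vec Im y"
  have ac: "a \<in> carrier_vec n" and bc: "b \<in> carrier_vec n" using yc unfolding a_def b_def by auto
  have Ta: "T *\<^sub>v a = Re z \<cdot>\<^sub>v a - Im z \<cdot>\<^sub>v b"
    unfolding a_def Re_mult_mat_vec[OF Tc yc, symmetric] y(3) b_def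
    by (rule eq_vecI, insert yc, auto)
  have Tb: "T *\<^sub>v b = Im z \<cdot>\<^sub>v a + Re z \<cdot>\<^sub>v b"
    unfolding b_def Im_mult_mat_vec[OF Tc yc, symmetric] y(3) a_def
    by (rule eq_vecI, insert yc, auto)
  have aperp: "(A *\<^sub>v v j) \<bullet> a = 0" and bperp: "(A *\<^sub>v v j) \<bullet> b = 0" if j: "j < k" for j
  proof -
    have "f j \<bullet> y = 0" using y(1) j unfolding S_def by auto
    moreover have Avc: "A *\<^sub>v v j \<in> carrier_vec n" using Ac vc[OF j] by auto
    ultimately show "(A *\<^sub>v v j) \<bullet> a = 0" "(A *\<^sub>v v j) \<bullet> b = 0"
      unfolding a_def b_def using Re_scalar[OF Avc yc] Im_scalar[OF Avc yc]
      unfolding f_def by auto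
  qed
  have ab0: "a \<noteq> 0\<^sub>v n \<or> b \<noteq> 0\<^sub>v n"
  proof (rule ccontr)
    assume "\<not> ?thesis"
    hence "a = 0\<^sub>v n" "b = 0\<^sub>v n" by auto
    hence "y = 0\<^sub>v n"
    proof (intro eq_vecI)
      fix i assume h: "a = 0\<^sub>v n" "b = 0\<^sub>v n" and "i < dim_vec (0\<^sub>v n :: complex vec)"
      hence i: "i < n" by simp
      have "a $ i = 0" "b $ i = 0" using h i by auto
      hence "Re (y $ i) = 0" "Im (y $ i) = 0" using i yc unfolding a_def b_def by auto
      thus "y $ i = 0\<^sub>v n $ i" using i by (simp add: complex_eq_iff)
    qed (insert yc, auto)
    with y(2) show False by simp
  qed
  have KT: "K *\<^sub>v x = A *\<^sub>v (T *\<^sub>v x)" if "x \<in> carrier_vec n" for x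
    using AT Ac Tc that by (metis assoc_mult_mat_vec)
  have Aab: "a \<bullet> (A *\<^sub>v b) = b \<bullet> (A *\<^sub>v a)" by (rule sym_scalar[OF Ac As ac bc])
  have Kab: "a \<bullet> (K *\<^sub>v b) = b \<bullet> (K *\<^sub>v a)" by (rule sym_scalar[OF K ac bc])
  have e1: "a \<bullet> (K *\<^sub>v b) = Im z * (a \<bullet> (A *\<^sub>v a)) + Re z * (a \<bullet> (A *\<^sub>v b))"
    unfolding KT[OF bc] Tb using ac bc Ac
    by (simp add: mult_add_distrib_mat_vec[of _ n n] scalar_prod_add_distrib[of _ n] mult_mat_vec)
  have e2: "b \<bullet> (K *\<^sub>v a) = Re z * (b \<bullet> (A *\<^sub>v a)) - Im z * (b \<bullet> (A *\<^sub>v b))"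
    unfolding KT[OF ac] Ta using ac bc Ac
    by (simp add: mult_minus_distrib_mat_vec[of _ n n] scalar_prod_minus_distrib[of _ n] mult_mat_vec)
  have "Im z * (a \<bullet> (A *\<^sub>v a) + b \<bullet> (A *\<^sub>v b)) = 0"
    using e1 e2 Aab Kab by (simp add: algebra_simps)
  moreover have "0 < a \<bullet> (A *\<^sub>v a) + b \<bullet> (A *\<^sub>v b)"
  proof -
    have "0 \<le> a \<bullet> (A *\<^sub>v a)" using Apd[OF ac] Ac by (cases "a = 0\<^sub>v n", auto)
    moreover have "0 \<le> b \<bullet> (A *\<^sub>v b)" using Apd[OF bc] Ac by (cases "b = 0\<^sub>v n", auto)
    ultimately show ?thesis using ab0 Apd[OF ac] Apd[OF bc] by auto
  qed
  ultimately have Imz: "Im z = 0" by simp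
  define x where "x = (if a \<noteq> 0\<^sub>v n then a else b)"
  have xc: "x \<in> carrier_vec n" using ac bc unfolding x_def by auto
  have x0: "x \<noteq> 0\<^sub>v n" using ab0 unfolding x_def by auto
  have Tx: "T *\<^sub>v x = Re z \<cdot>\<^sub>v x" unfolding x_def using Ta Tb Imz ac bc
    by (auto intro!: eq_vecI)
  have "K *\<^sub>v x = Re z \<cdot>\<^sub>v (A *\<^sub>v x)" unfolding KT[OF xc] Tx using Ac xc by (simp add: mult_mat_vec)
  moreover have "\<forall>j<k. (A *\<^sub>v v j) \<bullet> x = 0" unfolding x_def using aperp bperp by auto
  ultimately show ?thesis using xc x0 by blast
qed




lemma eigsys_exists:
  assumes K: "K \<in> carrier_mat n n" "transpose_mat K = K"
    and A: "sym_pd n A"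
  shows "k \<le> n \<Longrightarrow> \<exists>v l. eigsys n K A k v l"
proof (induct k)
  case 0
  then show ?case by (auto simp: eigsys_def)
next
  case (Suc k)
  then obtain v l where es: "eigsys n K A k v l" by auto
  have Ac: "A \<in> carrier_mat n n" and As: "transpose_mat A = A"
    and Apd: "\<And>x. x \<in> carrier_vec n \<Longrightarrow> x \<noteq> 0\<^sub>v n \<Longrightarrow> 0 < x \<bullet> (A *\<^sub>v x)"
    using A by (auto simp: sym_pd_def)
  from step_eigvec[OF K A es] Suc(2) obtain x \<mu> where
    x: "x \<in> carrier_vec n" "x \<noteq> 0\<^sub>v n" "K *\<^sub>v x = \<mu> \<cdot>\<^sub>v (A *\<^sub>v x)"
       "\<And>j. j < k \<Longrightarrow> (A *\<^sub>v v j) \<bullet> x = 0" by auto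
  define c where "c = 1 / sqrt (x \<bullet> (A *\<^sub>v x))"
  have pos: "0 < x \<bullet> (A *\<^sub>v x)" using Apd[OF x(1,2)] .
  define y where "y = c \<cdot>\<^sub>v x"
  have yc: "y \<in> carrier_vec n" unfolding y_def using x by auto
  have yy: "y \<bullet> (A *\<^sub>v y) = 1"
  proof -
    have Ax: "A *\<^sub>v x \<in> carrier_vec n" using Ac x by auto
    have "y \<bullet> (A *\<^sub>v y) = (c \<cdot>\<^sub>v x) \<bullet> (c \<cdot>\<^sub>v (A *\<^sub>v x))"
      unfolding y_def mult_mat_vec[OF Ac x(1)] ..
    also have "\<dots> = c * (c * (x \<bullet> (A *\<^sub>v x)))" using x(1) Ax by simp
    also have "\<dots> = 1" unfolding c_def using pos
      by (simp add: field_simps)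
    finally show ?thesis .
  qed
  have yK: "K *\<^sub>v y = \<mu> \<cdot>\<^sub>v (A *\<^sub>v y)" unfolding y_def using x Ac K
    by (simp add: mult_mat_vec smult_smult_assoc mult.commute)
  have vc: "\<And>j. j < k \<Longrightarrow> v j \<in> carrier_vec n" using es by (auto simp: eigsys_def)
  have vy: "v j \<bullet> (A *\<^sub>v y) = 0" if j: "j < k" for j
  proof -
    have "v j \<bullet> (A *\<^sub>v y) = y \<bullet> (A *\<^sub>v v j)" by (rule sym_scalar[OF Ac As vc[OF j] yc])
    also have "\<dots> = (A *\<^sub>v v j) \<bullet> y" using yc vc[OF j] Ac by (simp add: comm_scalar_prod[of _ n])
    also have "\<dots> = c * ((A *\<^sub>v v j) \<bullet> x)" unfolding y_def using x vc[OF j] Ac by simp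
    finally show ?thesis using x(4)[OF j] by simp
  qed
  have yv: "y \<bullet> (A *\<^sub>v v j) = 0" if j: "j < k" for j
    using vy[OF j] sym_scalar[OF Ac As vc[OF j] yc] by simp
  define v' where "v' = v(k := y)"
  define l' where "l' = l(k := \<mu>)"
  have "eigsys n K A (Suc k) v' l'"
    using es yc yy yK vy yv unfolding eigsys_def v'_def l'_def
    by (auto simp: less_Suc_eq)
  thus ?case by blast
qed

lemma comm_ring_hom_const_poly: "comm_ring_hom (\<lambda>a::'a::comm_ring_1. [:a:])"
  by (unfold_locales, auto simp: one_pCons)

lemma quad_entry:
  fixes V M :: "'a :: comm_ring_1 mat"
  assumes V: "V \<in> carrier_mat n n" and M: "M \<in> carrier_mat n n" and i: "i < n" and j: "j < n"
  shows "(transpose_mat V * M * V) $$ (i,j) = col V i \<bullet> (M *\<^sub>v col V j)"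
proof -
  have "transpose_mat V * M * V = transpose_mat V * (M * V)" using V M by (metis assoc_mult_mat transpose_carrier_mat)
  also have "\<dots> $$ (i,j) = row (transpose_mat V) i \<bullet> col (M * V) j" using V M i j by simp
  also have "col (M * V) j = M *\<^sub>v col V j" using col_mult2[OF M V j] .
  also have "row (transpose_mat V) i = col V i" using V i by simp
  finally show ?thesis .
qed

lemma const_mult: "[:a:] * [:b:] = [:a * (b :: 'a :: comm_ring_1):]" by simp

lemma gen_char_poly_eigsys:
  assumes K: "K \<in> carrier_mat n n" and A: "A \<in> carrier_mat n n"
    and es: "eigsys n K A n v l"
  shows "gen_char_poly K A = [:det A:] * (\<Prod>j\<leftarrow>[0..<n]. [:- l j, 1:])"
proof -
  define V where "V = mat n n (\<lambda>(i,j). v j $ i)"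
  have Vc: "V \<in> carrier_mat n n" unfolding V_def by auto
  have vc: "\<And>j. j < n \<Longrightarrow> v j \<in> carrier_vec n" using es by (auto simp: eigsys_def)
  have colV: "col V j = v j" if "j < n" for j
    unfolding V_def using that vc[OF that] by (intro eq_vecI, auto)
  define D where "D = mat n n (\<lambda>(i,j). if i = j then l j else (0::real))"
  have Dc: "D \<in> carrier_mat n n" unfolding D_def by auto
  have VAV: "transpose_mat V * A * V = 1\<^sub>m n"
  proof (rule eq_matI)
    fix i j assume "i < dim_row (1\<^sub>m n :: real mat)" "j < dim_col (1\<^sub>m n :: real mat)"
    hence i: "i < n" and j: "j < n" by auto
    have "(transpose_mat V * A * V) $$ (i,j) = v i \<bullet> (A *\<^sub>v v j)"
      using quad_entry[OF Vc A i j] colV[OF i] colV[OF j] by simp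
    also have "\<dots> = (if i = j then 1 else 0)" using es i j unfolding eigsys_def by blast
    also have "\<dots> = (1\<^sub>m n :: real mat) $$ (i,j)" using i j by simp
    finally show "(transpose_mat V * A * V) $$ (i,j) = (1\<^sub>m n :: real mat) $$ (i,j)" by simp
  qed (insert Vc A, auto)
  have VKV: "transpose_mat V * K * V = D"
  proof (rule eq_matI)
    fix i j assume ij: "i < dim_row D" "j < dim_col D"
    hence i: "i < n" and j: "j < n" using Dc by auto
    have "(transpose_mat V * K * V) $$ (i,j) = v i \<bullet> (K *\<^sub>v v j)"
      using quad_entry[OF Vc K i j] colV[OF i] colV[OF j] by simp
    also have "\<dots> = l j * (v i \<bullet> (A *\<^sub>v v j))"
      using es i j vc[OF j] A by (auto simp: eigsys_def)
    also have "\<dots> = D $$ (i,j)" using es i j unfolding D_def eigsys_def by auto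
    finally show "(transpose_mat V * K * V) $$ (i,j) = D $$ (i,j)" .
  qed (insert Vc K Dc, auto)
  have detV: "det V * det V * det A = 1"
  proof -
    have "det (transpose_mat V * A * V) = det (transpose_mat V * A) * det V"
      by (rule det_mult[of _ n], insert Vc A, auto)
    also have "det (transpose_mat V * A) = det (transpose_mat V) * det A"
      by (rule det_mult[of _ n], insert Vc A, auto)
    also have "det (transpose_mat V) = det V" using det_transpose[OF Vc] .
    finally have "det V * det A * det V = 1" unfolding VAV by simp
    thus ?thesis by (simp add: ac_simps)
  qed
  let ?P = "map_mat (\<lambda>a::real. [:a:])"
  let ?m = "\<lambda>a::real. [:- a:]"
  define G where "G = map_mat (\<lambda>b. [:0, b:]) A + map_mat ?m K"
  have G: "gen_char_poly K A = det G" unfolding gen_char_poly_def G_def by simp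
  have id: "?m = (\<lambda>a. [:a:] * [:-1:])" by (intro ext, auto)
  have Vt: "transpose_mat V \<in> carrier_mat n n" using Vc by simp
  have G1: "map_mat (\<lambda>b. [:0, b:]) A = [:0,1:] \<cdot>\<^sub>m ?P A"
    by (rule eq_matI, insert A, auto)
  have "?P (transpose_mat V) * ([:0,1:] \<cdot>\<^sub>m ?P A) = [:0,1:] \<cdot>\<^sub>m (?P (transpose_mat V) * ?P A)"
    by (rule mult_smult_distrib[of _ n n _ n], insert Vc A, auto)
  hence "?P (transpose_mat V) * ([:0,1:] \<cdot>\<^sub>m ?P A) * ?P V = ([:0,1:] \<cdot>\<^sub>m (?P (transpose_mat V) * ?P A)) * ?P V"
    by simp
  also have "\<dots> = [:0,1:] \<cdot>\<^sub>m (?P (transpose_mat V) * ?P A * ?P V)"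
    by (rule mult_smult_assoc_mat[of _ n n _ n], insert Vc A, auto)
  also have "?P (transpose_mat V) * ?P A * ?P V = ?P (transpose_mat V * A * V)"
    using Vc A Vt by (simp add: map_poly_mult(1)[of _ n n _ n])
  also have "\<dots> = ?P (1\<^sub>m n)" unfolding VAV ..
  also have "?P (1\<^sub>m n) = 1\<^sub>m n" by (rule eq_matI, auto simp: one_pCons)
  finally have L1: "?P (transpose_mat V) * ([:0,1:] \<cdot>\<^sub>m ?P A) * ?P V = [:0,1:] \<cdot>\<^sub>m 1\<^sub>m n" .
  have L2: "?P (transpose_mat V) * map_mat ?m K * ?P V = map_mat ?m D"
    unfolding VKV[symmetric] id
    by (subst map_poly_mult[OF mult_carrier_mat[OF Vt K] Vc],
      subst map_poly_mult(3)[OF Vt K], simp)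
  have "?P (transpose_mat V) * G * ?P V = 
    ?P (transpose_mat V) * ([:0,1:] \<cdot>\<^sub>m ?P A) * ?P V + ?P (transpose_mat V) * map_mat ?m K * ?P V"
    unfolding G_def G1
    by (subst mult_add_distrib_mat[of _ n n _ n], insert Vc A K, auto,
        subst add_mult_distrib_mat[of _ n n _ _ n], auto)
  also have "\<dots> = char_poly_matrix D" unfolding L1 L2 char_poly_matrix_def
    using Dc by (simp only: carrier_matD)
  finally have eq: "?P (transpose_mat V) * G * ?P V = char_poly_matrix D" .
  have Gc: "G \<in> carrier_mat n n" unfolding G_def using A K by auto
  have "det (?P (transpose_mat V) * G * ?P V) = det (?P (transpose_mat V) * G) * det (?P V)"
    by (rule det_mult[of _ n], insert Vc Gc, auto)
  also have "det (?P (transpose_mat V) * G) = det (?P (transpose_mat V)) * det G"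
    by (rule det_mult[of _ n], insert Vc Gc, auto)
  also have "det (?P (transpose_mat V)) = [:det (transpose_mat V):]"
    by (rule comm_ring_hom.hom_det[OF comm_ring_hom_const_poly])
  also have "det (transpose_mat V) = det V" by (rule det_transpose[OF Vc])
  also have "det (?P V) = [:det V:]"
    by (rule comm_ring_hom.hom_det[OF comm_ring_hom_const_poly])
  finally have "det (char_poly_matrix D) = [:det V:] * det G * [:det V:]" unfolding eq .
  hence cpD: "[:det V:] * det G * [:det V:] = char_poly D" unfolding char_poly_def by (rule sym)
  have chp: "char_poly D = (\<Prod>a\<leftarrow>diag_mat D. [:- a, 1:])"
    by (rule char_poly_upper_triangular[OF Dc], auto simp: upper_triangular_def D_def)
  have dg: "diag_mat D = map l [0..<n]" unfolding diag_mat_def D_def by (intro nth_equalityI, auto)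
  have "(\<Prod>a\<leftarrow>diag_mat D. [:- a, 1:]) = (\<Prod>j\<leftarrow>[0..<n]. [:- l j, 1:])"
    unfolding dg by (simp add: map_map comp_def)
  hence "[:det V:] * det G * [:det V:] = (\<Prod>j\<leftarrow>[0..<n]. [:- l j, 1:])" using cpD chp by simp
  hence "[:det A:] * ([:det V:] * det G * [:det V:]) = [:det A:] * (\<Prod>j\<leftarrow>[0..<n]. [:- l j, 1:])" by simp
  moreover have "[:det A:] * ([:det V:] * det G * [:det V:]) = [:det V * det V * det A:] * det G"
  proof -
    have "[:det A:] * ([:det V:] * det G * [:det V:]) = ([:det V:] * [:det V:] * [:det A:]) * det G"
      by (simp only: ac_simps)
    also have "[:det V:] * [:det V:] * [:det A:] = [:det V * det V * det A:]"
      by (simp add: const_mult)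
    finally show ?thesis .
  qed
  ultimately show ?thesis unfolding G detV by (simp add: one_pCons)
qed

lemma const_poly_mult: "[:c:] * p = Polynomial.smult c p" by simp

lemma proots_lin_prod: "proots (\<Prod>j\<leftarrow>js. [:- l j, 1:]) = mset (map l js)"
proof (induct js)
  case Nil
  then show ?case by simp
next
  case (Cons j js)
  have "0 \<notin> set (map (\<lambda>j. [:- l j, 1:]) js)" by auto
  hence "(\<Prod>j\<leftarrow>js. [:- l j, 1:]) \<noteq> 0" by (simp only: prod_list_zero_iff) simp
  hence "proots (\<Prod>j\<leftarrow>j#js. [:- l j, 1:]) = proots [:- l j, 1:] + proots (\<Prod>j\<leftarrow>js. [:- l j, 1:])"
    by (simp only: list.map prod_list.Cons, intro proots_mult, simp_all)
  then show ?case using Cons by (simp add: proots_linear_factor)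
qed

lemma gen_eig_eigsys:
  assumes K: "K \<in> carrier_mat n n" and A: "sym_pd n A"
    and es: "eigsys n K A n v l"
  shows "gen_eig K A i = sort (map l [0..<n]) ! (i - 1)"
proof -
  have Ac: "A \<in> carrier_mat n n" using A by (auto simp: sym_pd_def)
  have d: "det A \<noteq> 0" using pd_det_nonzero[OF A] .
  have "proots (gen_char_poly K A) = mset (map l [0..<n])"
    unfolding gen_char_poly_eigsys[OF K Ac es]
    unfolding const_poly_mult proots_smult[OF d] proots_lin_prod ..
  thus ?thesis unfolding gen_eig_def by (simp only: sorted_list_of_multiset_mset)
qed




lemma mv_zero[simp]: "A \<in> carrier_mat n m \<Longrightarrow> A *\<^sub>v 0\<^sub>v m = (0\<^sub>v n :: 'a :: comm_ring_1 vec)"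
  by (rule eq_vecI, auto)

definition lc :: "nat \<Rightarrow> nat \<Rightarrow> (nat \<Rightarrow> real) \<Rightarrow> (nat \<Rightarrow> real vec) \<Rightarrow> real vec" where
  "lc n m \<alpha> u = vec n (\<lambda>r. \<Sum>k<m. \<alpha> k * u k $ r)"

lemma lc_carrier[simp]: "lc n m \<alpha> u \<in> carrier_vec n" unfolding lc_def by auto

lemma lc_scalar:
  assumes z: "z \<in> carrier_vec n" and u: "\<And>k. k < m \<Longrightarrow> u k \<in> carrier_vec n"
  shows "z \<bullet> lc n m \<alpha> u = (\<Sum>k<m. \<alpha> k * (z \<bullet> u k))"
proof -
  have "z \<bullet> lc n m \<alpha> u = (\<Sum>r<n. z $ r * (\<Sum>k<m. \<alpha> k * u k $ r))"
    using z unfolding lc_def scalar_prod_def by (auto simp: lessThan_atLeast0)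
  also have "\<dots> = (\<Sum>k<m. \<alpha> k * (\<Sum>r<n. z $ r * u k $ r))"
    by (simp add: sum_distrib_left sum_distrib_right algebra_simps sum.swap[of _ "{..<m}"])
  also have "\<dots> = (\<Sum>k<m. \<alpha> k * (z \<bullet> u k))"
  proof (intro sum.cong refl)
    fix k assume "k \<in> {..<m}"
    hence "dim_vec (u k) = n" using u by auto
    thus "\<alpha> k * (\<Sum>r<n. z $ r * u k $ r) = \<alpha> k * (z \<bullet> u k)"
      by (simp add: scalar_prod_def lessThan_atLeast0)
  qed
  finally show ?thesis .
qed

lemma lc_mult:
  assumes M: "M \<in> carrier_mat n n" and u: "\<And>k. k < m \<Longrightarrow> u k \<in> carrier_vec n"
  shows "M *\<^sub>v lc n m \<alpha> u = lc n m \<alpha> (\<lambda>k. M *\<^sub>v u k)"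
proof (rule eq_vecI)
  fix r assume "r < dim_vec (lc n m \<alpha> (\<lambda>k. M *\<^sub>v u k))"
  hence r: "r < n" by (simp add: lc_def)
  have rc: "row M r \<in> carrier_vec n" using M r by auto
  show "(M *\<^sub>v lc n m \<alpha> u) $ r = lc n m \<alpha> (\<lambda>k. M *\<^sub>v u k) $ r"
    using lc_scalar[OF rc u] M r by (simp add: lc_def)
qed (insert M, auto simp: lc_def)

lemma sum_delta_inj:
  assumes inj: "inj_on a {..<(m::nat)}" and j: "j < m"
  shows "(\<Sum>k<m. \<alpha> k * (if a j = a k then 1 else (0::real))) = \<alpha> j"
proof -
  let ?f = "\<lambda>k. \<alpha> k * (if a j = a k then 1 else (0::real))"
  have "sum ?f {..<m} = ?f j + sum ?f ({..<m} - {j})"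
    by (rule sum.remove, insert j, auto)
  also have "sum ?f ({..<m} - {j}) = 0"
    by (rule sum.neutral, insert inj j, auto simp: inj_on_def)
  finally show ?thesis by simp
qed

lemma parseval:
  fixes \<alpha> :: "nat \<Rightarrow> real"
  assumes K: "K \<in> carrier_mat n n" and A: "A \<in> carrier_mat n n" "transpose_mat A = A"
    and es: "eigsys n K A n v l"
    and a: "inj_on a {..<m}" "\<And>k. k < m \<Longrightarrow> a k < n"
  shows "\<And>j. j < m \<Longrightarrow> v (a j) \<bullet> (A *\<^sub>v lc n m \<alpha> (\<lambda>k. v (a k))) = \<alpha> j"
    "lc n m \<alpha> (\<lambda>k. v (a k)) \<bullet> (A *\<^sub>v lc n m \<alpha> (\<lambda>k. v (a k))) = (\<Sum>k<m. \<alpha> k ^ 2)"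
    "lc n m \<alpha> (\<lambda>k. v (a k)) \<bullet> (K *\<^sub>v lc n m \<alpha> (\<lambda>k. v (a k))) = (\<Sum>k<m. l (a k) * \<alpha> k ^ 2)"
proof -
  define x where "x = lc n m \<alpha> (\<lambda>k. v (a k))"
  have vc: "\<And>k. k < m \<Longrightarrow> v (a k) \<in> carrier_vec n" using es a(2) by (auto simp: eigsys_def)
  have orth: "\<And>j k. j < m \<Longrightarrow> k < m \<Longrightarrow> v (a j) \<bullet> (A *\<^sub>v v (a k)) = (if a j = a k then 1 else 0)"
    using es a(2) by (auto simp: eigsys_def)
  have Kv: "\<And>k. k < m \<Longrightarrow> K *\<^sub>v v (a k) = l (a k) \<cdot>\<^sub>v (A *\<^sub>v v (a k))"
    using es a(2) by (auto simp: eigsys_def)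
  have Ax: "A *\<^sub>v x = lc n m \<alpha> (\<lambda>k. A *\<^sub>v v (a k))" unfolding x_def by (rule lc_mult[OF A(1) vc])
  have Kx: "K *\<^sub>v x = lc n m \<alpha> (\<lambda>k. K *\<^sub>v v (a k))" unfolding x_def by (rule lc_mult[OF K vc])
  have Avc: "\<And>k. k < m \<Longrightarrow> A *\<^sub>v v (a k) \<in> carrier_vec n" using A vc by auto
  have Kvc: "\<And>k. k < m \<Longrightarrow> K *\<^sub>v v (a k) \<in> carrier_vec n" using K vc by auto
  have c1: "v (a j) \<bullet> (A *\<^sub>v x) = \<alpha> j" if j: "j < m" for j
  proof -
    have "v (a j) \<bullet> (A *\<^sub>v x) = (\<Sum>k<m. \<alpha> k * (v (a j) \<bullet> (A *\<^sub>v v (a k))))"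
      unfolding Ax by (rule lc_scalar[OF vc[OF j] Avc])
    also have "\<dots> = (\<Sum>k<m. \<alpha> k * (if a j = a k then 1 else 0))"
      using orth j by (intro sum.cong, auto)
    also have "\<dots> = \<alpha> j" by (rule sum_delta_inj[OF a(1) j])
    finally show ?thesis .
  qed
  have xc: "x \<in> carrier_vec n" unfolding x_def by simp
  have Axc: "A *\<^sub>v x \<in> carrier_vec n" using A xc by auto
  have Kxc: "K *\<^sub>v x \<in> carrier_vec n" using K xc by auto
  have "x \<bullet> (A *\<^sub>v x) = (A *\<^sub>v x) \<bullet> x" using xc Axc by (simp add: comm_scalar_prod[of _ n])
  also have "\<dots> = (\<Sum>k<m. \<alpha> k * ((A *\<^sub>v x) \<bullet> v (a k)))" unfolding x_def
    by (rule lc_scalar[OF Axc[unfolded x_def] vc])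
  also have "\<dots> = (\<Sum>k<m. \<alpha> k * \<alpha> k)"
    using c1 vc Axc by (intro sum.cong refl, auto simp: comm_scalar_prod[of _ n])
  finally have c3: "x \<bullet> (A *\<^sub>v x) = (\<Sum>k<m. \<alpha> k ^ 2)" by (simp add: power2_eq_square)
  have c2: "v (a j) \<bullet> (K *\<^sub>v x) = l (a j) * \<alpha> j" if j: "j < m" for j
  proof -
    have "v (a j) \<bullet> (K *\<^sub>v x) = (\<Sum>k<m. \<alpha> k * (v (a j) \<bullet> (K *\<^sub>v v (a k))))"
      unfolding Kx by (rule lc_scalar[OF vc[OF j] Kvc])
    also have "\<dots> = (\<Sum>k<m. (l (a k) * \<alpha> k) * (if a j = a k then 1 else 0))"
      using orth j Kv vc A by (intro sum.cong, auto)
    also have "\<dots> = l (a j) * \<alpha> j" by (rule sum_delta_inj[OF a(1) j])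
    finally show ?thesis .
  qed
  have "x \<bullet> (K *\<^sub>v x) = (K *\<^sub>v x) \<bullet> x" using xc Kxc by (simp add: comm_scalar_prod[of _ n])
  also have "\<dots> = (\<Sum>k<m. \<alpha> k * ((K *\<^sub>v x) \<bullet> v (a k)))" unfolding x_def
    by (rule lc_scalar[OF Kxc[unfolded x_def] vc])
  also have "\<dots> = (\<Sum>k<m. \<alpha> k * (l (a k) * \<alpha> k))"
    using c2 vc Kxc by (intro sum.cong refl, auto simp: comm_scalar_prod[of _ n])
  finally have c4: "x \<bullet> (K *\<^sub>v x) = (\<Sum>k<m. l (a k) * \<alpha> k ^ 2)" 
    by (simp add: power2_eq_square ac_simps)
  show "\<And>j. j < m \<Longrightarrow> v (a j) \<bullet> (A *\<^sub>v lc n m \<alpha> (\<lambda>k. v (a k))) = \<alpha> j"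
    using c1 unfolding x_def by auto
  show "lc n m \<alpha> (\<lambda>k. v (a k)) \<bullet> (A *\<^sub>v lc n m \<alpha> (\<lambda>k. v (a k))) = (\<Sum>k<m. \<alpha> k ^ 2)"
    using c3 unfolding x_def .
  show "lc n m \<alpha> (\<lambda>k. v (a k)) \<bullet> (K *\<^sub>v lc n m \<alpha> (\<lambda>k. v (a k))) = (\<Sum>k<m. l (a k) * \<alpha> k ^ 2)"
    using c4 unfolding x_def .
qed

lemma sum_split_add: "(\<Sum>k<(m::nat) + p. f k) = (\<Sum>k<m. f k) + (\<Sum>k<p. f (m + k))"
  by (induct p, auto simp: add.assoc)

lemma length_filter_sort: "length (filter P (sort xs)) = length (filter P xs)"
proof -
  have "length (filter P (sort xs)) = size (mset (filter P (sort xs)))" by (simp only: size_mset)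
  also have "\<dots> = size (filter_mset P (mset (sort xs)))" by (simp only: mset_filter)
  also have "\<dots> = size (filter_mset P (mset xs))" by (simp only: mset_sort)
  also have "\<dots> = size (mset (filter P xs))" by (simp only: mset_filter)
  finally show ?thesis by (simp only: size_mset)
qed

lemma count_below:
  fixes xs :: "real list"
  assumes i: "1 \<le> i" "i \<le> length xs"
  shows "i \<le> card {j. j < length xs \<and> xs ! j \<le> sort xs ! (i - 1)}"
proof -
  let ?s = "sort xs"
  let ?P = "\<lambda>x. x \<le> ?s ! (i - 1)"
  have "card {j. j < length xs \<and> ?P (xs ! j)} = length (filter ?P xs)"
    by (simp add: length_filter_conv_card)
  also have "\<dots> = length (filter ?P ?s)" by (simp add: length_filter_sort)
  also have "\<dots> = card {j. j < length ?s \<and> ?P (?s ! j)}" by (simp add: length_filter_conv_card)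
  finally have eq: "card {j. j < length xs \<and> ?P (xs ! j)} = card {j. j < length ?s \<and> ?P (?s ! j)}" .
  have "{0..<i} \<subseteq> {j. j < length ?s \<and> ?P (?s ! j)}"
    using i by (auto intro!: sorted_nth_mono)
  from card_mono[OF _ this] have "i \<le> card {j. j < length ?s \<and> ?P (?s ! j)}" by simp
  thus ?thesis using eq by simp
qed

lemma count_above:
  fixes xs :: "real list"
  assumes i: "1 \<le> i" "i \<le> length xs"
  shows "length xs + 1 - i \<le> card {j. j < length xs \<and> sort xs ! (i - 1) \<le> xs ! j}"
proof -
  let ?s = "sort xs"
  let ?P = "\<lambda>x. ?s ! (i - 1) \<le> x"
  have "card {j. j < length xs \<and> ?P (xs ! j)} = length (filter ?P xs)"
    by (simp add: length_filter_conv_card)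
  also have "\<dots> = length (filter ?P ?s)" by (simp add: length_filter_sort)
  also have "\<dots> = card {j. j < length ?s \<and> ?P (?s ! j)}" by (simp add: length_filter_conv_card)
  finally have eq: "card {j. j < length xs \<and> ?P (xs ! j)} = card {j. j < length ?s \<and> ?P (?s ! j)}" .
  have "{i - 1..<length xs} \<subseteq> {j. j < length ?s \<and> ?P (?s ! j)}"
    using i by (auto intro!: sorted_nth_mono)
  from card_mono[OF _ this] have "length xs + 1 - i \<le> card {j. j < length ?s \<and> ?P (?s ! j)}"
    using i by simp
  thus ?thesis using eq by simp
qed

lemma eig_compare:
  assumes K: "K \<in> carrier_mat n n"
    and A: "sym_pd n A" and B: "sym_pd n B"
    and esA: "eigsys n K A n vA lA" and esB: "eigsys n K B n vB lB"
    and lA0: "\<And>j. j < n \<Longrightarrow> 0 \<le> lA j"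
    and AB: "\<And>x. x \<in> carrier_vec n \<Longrightarrow> x \<bullet> (A *\<^sub>v x) \<le> \<gamma> * (x \<bullet> (B *\<^sub>v x))"
    and i: "1 \<le> i" "i \<le> n"
  shows "sort (map lB [0..<n]) ! (i-1) \<le> \<gamma> * sort (map lA [0..<n]) ! (i-1)"
proof -
  have Ac: "A \<in> carrier_mat n n" "transpose_mat A = A" using A by (auto simp: sym_pd_def)
  have Bc: "B \<in> carrier_mat n n" "transpose_mat B = B" 
    and Bpd: "\<And>x. x \<in> carrier_vec n \<Longrightarrow> x \<noteq> 0\<^sub>v n \<Longrightarrow> 0 < x \<bullet> (B *\<^sub>v x)"
    using B by (auto simp: sym_pd_def)
  define xsA where "xsA = map lA [0..<n]"
  define xsB where "xsB = map lB [0..<n]"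
  define \<mu> where "\<mu> = sort xsA ! (i - 1)"
  define \<nu> where "\<nu> = sort xsB ! (i - 1)"
  have lenA: "length xsA = n" and lenB: "length xsB = n" unfolding xsA_def xsB_def by auto
  have mu0: "0 \<le> \<mu>"
  proof -
    have "\<mu> \<in> set (sort xsA)" unfolding \<mu>_def using i lenA by (intro nth_mem, auto)
    hence "\<mu> \<in> set xsA" by simp
    then obtain j where "j < n" "\<mu> = lA j" unfolding xsA_def by auto
    thus ?thesis using lA0 by auto
  qed
  define IA where "IA = {j. j < n \<and> lA j \<le> \<mu>}"
  define IB where "IB = {j. j < n \<and> \<nu> \<le> lB j}"
  have "{j. j < length xsA \<and> xsA ! j \<le> sort xsA ! (i - 1)} = IA"
    unfolding IA_def \<mu>_def lenA by (auto simp: xsA_def)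
  with count_below[of i xsA] i lenA have cA: "i \<le> card IA" by simp
  have "{j. j < length xsB \<and> sort xsB ! (i - 1) \<le> xsB ! j} = IB"
    unfolding IB_def \<nu>_def lenB by (auto simp: xsB_def)
  with count_above[of i xsB] i lenB have cB: "n + 1 - i \<le> card IB" by simp
  define m2 where "m2 = n + 1 - i"
  have im2: "i + m2 = Suc n" unfolding m2_def using i by simp
  obtain TA where TA: "TA \<subseteq> IA" "card TA = i" "finite TA"
    using obtain_subset_with_card_n[OF cA] by metis
  obtain TB where TB: "TB \<subseteq> IB" "card TB = m2" "finite TB"
    using obtain_subset_with_card_n[OF cB[folded m2_def]] by metis
  obtain fa where fa: "bij_betw fa {0..<i} TA" using ex_bij_betw_nat_finite[OF TA(3)] TA(2) by auto
  obtain fb where fb: "bij_betw fb {0..<m2} TB" using ex_bij_betw_nat_finite[OF TB(3)] TB(2) by auto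
  have fa_inj: "inj_on fa {..<i}" using bij_betw_imp_inj_on[OF fa] by (simp add: lessThan_atLeast0)
  have fb_inj: "inj_on fb {..<m2}" using bij_betw_imp_inj_on[OF fb] by (simp add: lessThan_atLeast0)
  have fa_IA: "\<And>k. k < i \<Longrightarrow> fa k \<in> IA" using fa TA(1) by (auto simp: bij_betw_def)
  have fb_IB: "\<And>k. k < m2 \<Longrightarrow> fb k \<in> IB" using fb TB(1) by (auto simp: bij_betw_def)
  have fan: "\<And>k. k < i \<Longrightarrow> fa k < n" using fa_IA by (auto simp: IA_def)
  have fbn: "\<And>k. k < m2 \<Longrightarrow> fb k < n" using fb_IB by (auto simp: IB_def)
  have vAc: "\<And>j. j < n \<Longrightarrow> vA j \<in> carrier_vec n" using esA by (auto simp: eigsys_def)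
  have vBc: "\<And>j. j < n \<Longrightarrow> vB j \<in> carrier_vec n" using esB by (auto simp: eigsys_def)
  define W where "W = mat n (Suc n) (\<lambda>(r,k). (if k < i then vA (fa k) else vB (fb (k - i))) $ r)"
  have Wc: "W \<in> carrier_mat n (Suc n)" unfolding W_def by auto
  from kernel_nonzero[OF Wc] obtain c where
    c: "c \<in> carrier_vec (Suc n)" "c \<noteq> 0\<^sub>v (Suc n)" "W *\<^sub>v c = 0\<^sub>v n" by auto
  define \<alpha> where "\<alpha> k = c $ k" for k
  define \<beta> where "\<beta> k = - c $ (i + k)" for k
  define x where "x = lc n i \<alpha> (\<lambda>k. vA (fa k))"
  define y where "y = lc n m2 \<beta> (\<lambda>k. vB (fb k))"
  have xy: "x = y"
  proof (rule eq_vecI)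
    fix r assume "r < dim_vec y"
    hence r: "r < n" unfolding y_def lc_def by simp
    have "0 = (W *\<^sub>v c) $ r" using c(3) r by simp
    also have "\<dots> = (\<Sum>k<Suc n. W $$ (r,k) * c $ k)"
      using r c(1) Wc by (auto simp: scalar_prod_def lessThan_atLeast0 intro!: sum.cong)
    also have "\<dots> = (\<Sum>k<i. W $$ (r,k) * c $ k) + (\<Sum>k<m2. W $$ (r,i+k) * c $ (i+k))"
      unfolding im2[symmetric] sum_split_add ..
    also have "(\<Sum>k<i. W $$ (r,k) * c $ k) = x $ r"
      unfolding x_def lc_def \<alpha>_def W_def using r i by (auto simp: mult.commute intro!: sum.cong)
    also have "(\<Sum>k<m2. W $$ (r,i+k) * c $ (i+k)) = - y $ r"
      unfolding y_def lc_def \<beta>_def W_def using r i im2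
      by (auto simp: mult.commute sum_negf[symmetric] intro!: sum.cong)
    finally show "x $ r = y $ r" by simp
  qed (simp add: x_def y_def lc_def)
  have PA1: "vA (fa j) \<bullet> (A *\<^sub>v x) = \<alpha> j" if "j < i" for j
    unfolding x_def by (rule parseval(1)[OF K Ac esA fa_inj fan that])
  have PA2: "x \<bullet> (A *\<^sub>v x) = (\<Sum>k<i. \<alpha> k ^ 2)"
    unfolding x_def by (rule parseval(2)[OF K Ac esA fa_inj fan])
  have PA3: "x \<bullet> (K *\<^sub>v x) = (\<Sum>k<i. lA (fa k) * \<alpha> k ^ 2)"
    unfolding x_def by (rule parseval(3)[OF K Ac esA fa_inj fan])
  have PB1: "vB (fb j) \<bullet> (B *\<^sub>v y) = \<beta> j" if "j < m2" for j
    unfolding y_def by (rule parseval(1)[OF K Bc esB fb_inj fbn that])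
  have PB2: "y \<bullet> (B *\<^sub>v y) = (\<Sum>k<m2. \<beta> k ^ 2)"
    unfolding y_def by (rule parseval(2)[OF K Bc esB fb_inj fbn])
  have PB3: "y \<bullet> (K *\<^sub>v y) = (\<Sum>k<m2. lB (fb k) * \<beta> k ^ 2)"
    unfolding y_def by (rule parseval(3)[OF K Bc esB fb_inj fbn])
  have xc: "x \<in> carrier_vec n" unfolding x_def by simp
  have x0: "x \<noteq> 0\<^sub>v n"
  proof
    assume x0: "x = 0\<^sub>v n"
    have a0: "\<alpha> j = 0" if "j < i" for j
      using PA1[OF that] x0 Ac(1) vAc[OF fan[OF that]] by simp
    have b0: "\<beta> j = 0" if "j < m2" for j
      using PB1[OF that] x0[unfolded xy] Bc(1) vBc[OF fbn[OF that]] by simp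
    have "c = 0\<^sub>v (Suc n)"
    proof (rule eq_vecI)
      fix k assume "k < dim_vec (0\<^sub>v (Suc n) :: real vec)"
      hence k: "k < Suc n" by simp
      show "c $ k = 0\<^sub>v (Suc n) $ k"
      proof (cases "k < i")
        case True
        then show ?thesis using a0[OF True] k unfolding \<alpha>_def by simp
      next
        case False
        hence "k - i < m2" "i + (k - i) = k" using k im2 by auto
        then show ?thesis using b0[of "k - i"] k unfolding \<beta>_def by simp
      qed
    qed (insert c(1), auto)
    with c(2) show False by simp
  qed
  have upper: "x \<bullet> (K *\<^sub>v x) \<le> \<mu> * (x \<bullet> (A *\<^sub>v x))"
  proof -
    have "x \<bullet> (K *\<^sub>v x) = (\<Sum>k<i. lA (fa k) * \<alpha> k ^ 2)" by (rule PA3)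
    also have "\<dots> \<le> (\<Sum>k<i. \<mu> * \<alpha> k ^ 2)"
      using fa_IA by (intro sum_mono mult_right_mono, auto simp: IA_def)
    also have "\<dots> = \<mu> * (x \<bullet> (A *\<^sub>v x))" unfolding PA2 by (simp add: sum_distrib_left)
    finally show ?thesis .
  qed
  have lower: "\<nu> * (x \<bullet> (B *\<^sub>v x)) \<le> x \<bullet> (K *\<^sub>v x)"
  proof -
    have "\<nu> * (x \<bullet> (B *\<^sub>v x)) = (\<Sum>k<m2. \<nu> * \<beta> k ^ 2)" unfolding xy PB2 by (simp add: sum_distrib_left)
    also have "\<dots> \<le> (\<Sum>k<m2. lB (fb k) * \<beta> k ^ 2)"
      using fb_IB by (intro sum_mono mult_right_mono, auto simp: IB_def)
    also have "\<dots> = x \<bullet> (K *\<^sub>v x)" unfolding xy by (rule PB3[symmetric])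
    finally show ?thesis .
  qed
  have "\<mu> * (x \<bullet> (A *\<^sub>v x)) \<le> \<mu> * (\<gamma> * (x \<bullet> (B *\<^sub>v x)))"
    using AB[OF xc] mu0 by (rule mult_left_mono)
  with upper lower have "\<nu> * (x \<bullet> (B *\<^sub>v x)) \<le> (\<gamma> * \<mu>) * (x \<bullet> (B *\<^sub>v x))"
    by (simp add: ac_simps)
  moreover have "0 < x \<bullet> (B *\<^sub>v x)" using Bpd[OF xc x0] .
  ultimately have "\<nu> \<le> \<gamma> * \<mu>" by simp
  thus ?thesis unfolding \<nu>_def \<mu>_def xsA_def xsB_def .
qed




section \<open>Assembly\<close>

lemma quad_sum: assumes M: "M \<in> carrier_mat n n" and x: "x \<in> carrier_vec n"
  shows "x \<bullet> (M *\<^sub>v x) = (\<Sum>i<n. \<Sum>j<n. x $ i * M $$ (i,j) * x $ j)"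
  using M x by (auto simp: scalar_prod_def lessThan_atLeast0 sum_distrib_left ac_simps intro!: sum.cong)

lemma assemble_carrier[simp]: "assemble n N L A \<in> carrier_mat n n"
  unfolding assemble_def by auto

lemma assemble_quad:
  assumes L: "\<And>e. e < N \<Longrightarrow> L e \<in> carrier_mat m n" and A: "\<And>e. e < N \<Longrightarrow> A e \<in> carrier_mat m m"
    and x: "x \<in> carrier_vec n"
  shows "x \<bullet> (assemble n N L A *\<^sub>v x) = (\<Sum>e<N. (L e *\<^sub>v x) \<bullet> (A e *\<^sub>v (L e *\<^sub>v x)))"
proof -
  define Ne where "Ne e = transpose_mat (L e) * A e * L e" for e
  have Nc: "Ne e \<in> carrier_mat n n" if e: "e < N" for e
    unfolding Ne_def using L[OF e] A[OF e] by (meson mult_carrier_mat transpose_carrier_mat)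
  have "x \<bullet> (assemble n N L A *\<^sub>v x) = (\<Sum>i<n. \<Sum>j<n. x $ i * (\<Sum>e<N. Ne e $$ (i,j)) * x $ j)"
    unfolding quad_sum[OF assemble_carrier x] by (simp add: assemble_def Ne_def)
  also have "\<dots> = (\<Sum>e<N. \<Sum>i<n. \<Sum>j<n. x $ i * Ne e $$ (i,j) * x $ j)"
    by (simp add: sum_distrib_left sum_distrib_right sum.swap[of _ "{..<N}"] ac_simps)
  also have "\<dots> = (\<Sum>e<N. x \<bullet> (Ne e *\<^sub>v x))"
    by (intro sum.cong refl, subst quad_sum[OF Nc x], auto)
  also have "\<dots> = (\<Sum>e<N. (L e *\<^sub>v x) \<bullet> (A e *\<^sub>v (L e *\<^sub>v x)))"
  proof (intro sum.cong refl)
    fix e assume "e \<in> {..<N}"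
    hence e: "e < N" by simp
    have Lx: "L e *\<^sub>v x \<in> carrier_vec m" using L[OF e] x by auto
    have ALx: "A e *\<^sub>v (L e *\<^sub>v x) \<in> carrier_vec m" using A[OF e] Lx by auto
    have Lt: "transpose_mat (L e) \<in> carrier_mat n m" using L[OF e] by simp
    have "Ne e *\<^sub>v x = (transpose_mat (L e) * A e) *\<^sub>v (L e *\<^sub>v x)"
      unfolding Ne_def by (rule assoc_mult_mat_vec[of _ n m _ n], insert Lt A[OF e] L[OF e] x, auto)
    also have "\<dots> = transpose_mat (L e) *\<^sub>v (A e *\<^sub>v (L e *\<^sub>v x))"
      by (rule assoc_mult_mat_vec[of _ n m _ m], insert Lt A[OF e] Lx, auto)
    finally have "Ne e *\<^sub>v x = transpose_mat (L e) *\<^sub>v (A e *\<^sub>v (L e *\<^sub>v x))" .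
    hence "x \<bullet> (Ne e *\<^sub>v x) = (transpose_mat (L e) *\<^sub>v (A e *\<^sub>v (L e *\<^sub>v x))) \<bullet> x"
      using x L[OF e] ALx by (simp add: comm_scalar_prod[of _ n])
    also have "\<dots> = (A e *\<^sub>v (L e *\<^sub>v x)) \<bullet> (L e *\<^sub>v x)"
      by (rule transpose_vec_mult_scalar[OF L[OF e] x ALx])
    also have "\<dots> = (L e *\<^sub>v x) \<bullet> (A e *\<^sub>v (L e *\<^sub>v x))"
      using Lx ALx by (simp add: comm_scalar_prod[of _ m])
    finally show "x \<bullet> (Ne e *\<^sub>v x) = (L e *\<^sub>v x) \<bullet> (A e *\<^sub>v (L e *\<^sub>v x))" .
  qed
  finally show ?thesis .
qed

lemma assemble_sym:
  assumes L: "\<And>e. e < N \<Longrightarrow> L e \<in> carrier_mat m n" and A: "\<And>e. e < N \<Longrightarrow> A e \<in> carrier_mat m m"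
    and S: "\<And>e. e < N \<Longrightarrow> transpose_mat (A e) = A e"
  shows "transpose_mat (assemble n N L A) = assemble n N L A"
proof (rule eq_matI)
  fix i j assume ij: "i < dim_row (assemble n N L A)" "j < dim_col (assemble n N L A)"
  hence i: "i < n" and j: "j < n" by (auto simp: assemble_def)
  have "(transpose_mat (L e) * A e * L e) $$ (j,i) = (transpose_mat (L e) * A e * L e) $$ (i,j)" if e: "e < N" for e
  proof -
    have c: "transpose_mat (L e) * A e * L e \<in> carrier_mat n n" using L[OF e] A[OF e] by auto
    have Lt: "transpose_mat (L e) \<in> carrier_mat n m" using L[OF e] by simp
    have "transpose_mat (transpose_mat (L e) * A e * L e) = transpose_mat (L e) * transpose_mat (transpose_mat (L e) * A e)"
      by (rule transpose_mult[of _ n m _ n], insert Lt A[OF e] L[OF e], auto)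
    also have "transpose_mat (transpose_mat (L e) * A e) = transpose_mat (A e) * L e"
      using transpose_mult[OF Lt A[OF e]] by simp
    also have "transpose_mat (L e) * (transpose_mat (A e) * L e) = transpose_mat (L e) * transpose_mat (A e) * L e"
      by (rule assoc_mult_mat[symmetric, of _ n m _ m _ n], insert Lt A[OF e] L[OF e], auto)
    also have "\<dots> = transpose_mat (L e) * A e * L e" using S[OF e] by simp
    finally have "transpose_mat (transpose_mat (L e) * A e * L e) $$ (i,j) = (transpose_mat (L e) * A e * L e) $$ (i,j)"
      by simp
    moreover have "transpose_mat (transpose_mat (L e) * A e * L e) $$ (i,j) = (transpose_mat (L e) * A e * L e) $$ (j,i)"
      by (rule index_transpose_mat(1), insert c i j, auto)
    ultimately show ?thesis by simp
  qed
  thus "transpose_mat (assemble n N L A) $$ (i,j) = assemble n N L A $$ (i,j)"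
    using i j by (simp add: assemble_def)
qed (auto simp: assemble_def)

lemma bool_mat_carrier[simp]: "bool_mat m n idx \<in> carrier_mat m n" unfolding bool_mat_def by auto

lemma bool_mat_apply:
  assumes x: "x \<in> carrier_vec n" and idx: "\<And>k. k < m \<Longrightarrow> idx k < n"
  shows "bool_mat m n idx *\<^sub>v x = vec m (\<lambda>k. x $ idx k)"
proof (rule eq_vecI)
  fix k assume "k < dim_vec (vec m (\<lambda>k. x $ idx k))"
  hence k: "k < m" by simp
  have "(bool_mat m n idx *\<^sub>v x) $ k = (\<Sum>j\<in>{0..<n}. (if j = idx k then 1 else 0) * x $ j)"
    using k x by (simp add: bool_mat_def scalar_prod_def)
  also have "\<dots> = (\<Sum>j\<in>{0..<n}. if j = idx k then x $ j else 0)" by (rule sum.cong, auto)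
  also have "\<dots> = x $ idx k" using idx[OF k] by simp
  finally show "(bool_mat m n idx *\<^sub>v x) $ k = vec m (\<lambda>k. x $ idx k) $ k" using k by simp
qed (auto simp: bool_mat_def)




section \<open>Element matrices\<close>

lemma block_sum: "(\<Sum>i<8 * m. f i) = (\<Sum>b<m. \<Sum>r<8. f (8 * b + r :: nat))"
proof (induct m)
  case 0
  then show ?case by simp
next
  case (Suc m)
  have e: "8 * Suc m = 8 * m + 8" by simp
  have "(\<Sum>i<8 * Suc m. f i) = (\<Sum>i<8 * m + 8. f i)" unfolding e ..
  also have "\<dots> = (\<Sum>i<8 * m. f i) + (\<Sum>r<8. f (8 * m + r))" by (rule sum_split_add)
  finally show ?case using Suc by simp
qed

lemma div8[simp]: "r < 8 \<Longrightarrow> (8 * b + r) div 8 = (b::nat)" by simp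
lemma mod8[simp]: "r < 8 \<Longrightarrow> (8 * b + r) mod 8 = (r::nat)" by simp

lemma sum_sq_bound: "(\<Sum>r<m. z r)^2 \<le> real m * (\<Sum>r<m. (z r)^2)"
proof -
  have "(\<Sum>r<m. z r)^2 = (\<Sum>r<m. \<Sum>s<m. z r * z s)"
    by (simp add: power2_eq_square sum_product)
  also have "\<dots> \<le> (\<Sum>r<m. \<Sum>s<m. ((z r)^2 + (z s)^2) / 2)"
  proof (intro sum_mono)
    fix r s
    have "0 \<le> (z r - z s)^2" by simp
    thus "z r * z s \<le> ((z r)^2 + (z s)^2) / 2" by (simp add: power2_diff field_simps)
  qed
  also have "\<dots> = (\<Sum>r<m. \<Sum>s<m. (z r)^2 / 2) + (\<Sum>r<m. \<Sum>s<m. (z s)^2 / 2)"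
    by (simp only: add_divide_distrib sum.distrib)
  also have "(\<Sum>r<m. \<Sum>s<m. (z r)^2 / 2) = (\<Sum>r<m. real m * ((z r)^2 / 2))"
    by simp
  also have "(\<Sum>r<m. \<Sum>s<m. (z s)^2 / 2) = (\<Sum>r<m. (\<Sum>s<m. (z s)^2) / 2)"
    by (simp only: sum_divide_distrib)
  also have "\<dots> = real m * ((\<Sum>s<m. (z s)^2) / 2)" by simp
  also have "(\<Sum>r<m. real m * ((z r)^2 / 2)) = real m * ((\<Sum>s<m. (z s)^2) / 2)"
    by (simp only: sum_distrib_left[symmetric] sum_divide_distrib)
  finally show ?thesis by simp
qed

lemma kron_carrier: "kron (1\<^sub>m 3) (X :: real mat) \<in> carrier_mat 24 24" if "X \<in> carrier_mat 8 8"
  using that unfolding kron_def by auto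

lemma kron_entry: assumes X: "X \<in> carrier_mat 8 8" and i: "i < 24" and j: "j < 24"
  shows "kron (1\<^sub>m 3) X $$ (i,j) = (if i div 8 = j div 8 then X $$ (i mod 8, j mod 8) else 0)"
proof -
  have "i div 8 < 3" "j div 8 < 3" using i j by auto
  thus ?thesis using X i j unfolding kron_def by auto
qed

lemma eq_div_mod8: "i div 8 = j div 8 \<Longrightarrow> i mod 8 = j mod 8 \<Longrightarrow> i = (j::nat)"
  by (metis div_mult_mod_eq)

lemma sum_diag: assumes "i < (m::nat)"
  shows "(\<Sum>j<m. f j * (if i = j then a else 0) * g j) = f i * a * (g i :: real)"
proof -
  have "(\<Sum>j<m. f j * (if i = j then a else 0) * g j) = (\<Sum>j<m. if j = i then f j * a * g j else 0)"
    by (rule sum.cong, auto)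
  also have "\<dots> = f i * a * g i" using assms by simp
  finally show ?thesis .
qed

lemma elemM:
  assumes y: "y \<in> carrier_vec 24"
  shows "y \<bullet> (kron (1\<^sub>m 3) (a \<cdot>\<^sub>m 1\<^sub>m 8) *\<^sub>v y) = a * (\<Sum>k<24. (y $ k)^2)"
proof -
  let ?X = "a \<cdot>\<^sub>m 1\<^sub>m 8 :: real mat"
  have X: "?X \<in> carrier_mat 8 8" by simp
  have E: "kron (1\<^sub>m 3) ?X \<in> carrier_mat 24 24" by (rule kron_carrier[OF X])
  have ent: "kron (1\<^sub>m 3) ?X $$ (i,j) = (if i = j then a else 0)" if "i < 24" "j < 24" for i j
    using kron_entry[OF X that] that eq_div_mod8[of i j] by auto
  have "y \<bullet> (kron (1\<^sub>m 3) ?X *\<^sub>v y) = (\<Sum>i<24. \<Sum>j<24. y $ i * (if i = j then a else 0) * y $ j)"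
    unfolding quad_sum[OF E y] by (intro sum.cong refl, simp add: ent)
  also have "\<dots> = (\<Sum>i<24. a * (y $ i)^2)"
    by (intro sum.cong refl, subst sum_diag, auto simp: power2_eq_square)
  finally show ?thesis by (simp add: sum_distrib_left)
qed

lemma elemE:
  assumes y: "y \<in> carrier_vec 24"
  shows "y \<bullet> (kron (1\<^sub>m 3) (c \<cdot>\<^sub>m (8 \<cdot>\<^sub>m 1\<^sub>m 8 - mat 8 8 (\<lambda>_. 1))) *\<^sub>v y) =
    c * (8 * (\<Sum>k<24. (y $ k)^2) - (\<Sum>b<3. (\<Sum>r<8. y $ (8*b+r))^2))"
proof -
  let ?X = "c \<cdot>\<^sub>m (8 \<cdot>\<^sub>m 1\<^sub>m 8 - mat 8 8 (\<lambda>_. 1)) :: real mat"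
  have X: "?X \<in> carrier_mat 8 8" by (intro smult_carrier_mat minus_carrier_mat, auto)
  have E: "kron (1\<^sub>m 3) ?X \<in> carrier_mat 24 24" by (rule kron_carrier[OF X])
  have ent: "kron (1\<^sub>m 3) ?X $$ (i,j) = (if i = j then 8 * c else 0) - (if i div 8 = j div 8 then c else 0)"
    if "i < 24" "j < 24" for i j
    using kron_entry[OF X that] that eq_div_mod8[of i j] by (auto simp: algebra_simps)
  have "y \<bullet> (kron (1\<^sub>m 3) ?X *\<^sub>v y) = (\<Sum>i<24. \<Sum>j<24. y $ i * ((if i = j then 8 * c else 0) - (if i div 8 = j div 8 then c else 0)) * y $ j)"
    unfolding quad_sum[OF E y] by (intro sum.cong refl, simp add: ent)
  also have "\<dots> = (\<Sum>i<24. \<Sum>j<24. y $ i * (if i = j then 8 * c else 0) * y $ j) -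
      (\<Sum>i<24. \<Sum>j<24. y $ i * (if i div 8 = j div 8 then c else 0) * y $ j)"
    by (simp add: sum_subtractf algebra_simps)
  finally have h12: "y \<bullet> (kron (1\<^sub>m 3) ?X *\<^sub>v y) = (\<Sum>i<24. \<Sum>j<24. y $ i * (if i = j then 8 * c else 0) * y $ j) -
      (\<Sum>i<24. \<Sum>j<24. y $ i * (if i div 8 = j div 8 then c else 0) * y $ j)" .
  have "(\<Sum>i<24. \<Sum>j<24. y $ i * (if i = j then 8 * c else 0) * y $ j) = (\<Sum>i<24. 8 * c * (y $ i)^2)"
    by (intro sum.cong refl, subst sum_diag, auto simp: power2_eq_square)
  also have "\<dots> = 8 * c * (\<Sum>k<24. (y $ k)^2)" by (simp add: sum_distrib_left)
  finally have h3: "(\<Sum>i<24. \<Sum>j<24. y $ i * (if i = j then 8 * c else 0) * y $ j) = 8 * c * (\<Sum>k<24. (y $ k)^2)" .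
  have bs: "\<And>f. (\<Sum>i<(24::nat). f i) = (\<Sum>b<(3::nat). \<Sum>r<8. f (8*b+r))" using block_sum[where m=3] by simp
  have "(\<Sum>i<24. \<Sum>j<24. y $ i * (if i div 8 = j div 8 then c else 0) * y $ j) = 
     (\<Sum>b<3. \<Sum>r<8. \<Sum>b'<3. \<Sum>r'<8. y $ (8*b+r) * (if (8*b+r) div 8 = (8*b'+r') div 8 then c else 0) * y $ (8*b'+r'))"
    unfolding bs ..
  also have "\<dots> = (\<Sum>b<3. \<Sum>r<8. \<Sum>b'<3. \<Sum>r'<8. y $ (8*b+r) * (if b = b' then c else 0) * y $ (8*b'+r'))"
  proof (intro sum.cong refl)
    fix b r b' r' :: nat assume "r \<in> {..<8}" "r' \<in> {..<8}"
    hence "r < 8" "r' < 8" by auto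
    hence "((8*b+r) div 8 = (8*b'+r') div 8) = (b = b')" by simp
    thus "y $ (8*b+r) * (if (8*b+r) div 8 = (8*b'+r') div 8 then c else 0) * y $ (8*b'+r') =
      y $ (8*b+r) * (if b = b' then c else 0) * y $ (8*b'+r')" by simp
  qed
  also have "\<dots> = (\<Sum>b<3. \<Sum>r<8. \<Sum>r'<8. c * (y $ (8*b+r) * y $ (8*b+r')))"
  proof (rule sum.cong[OF refl], rule sum.cong[OF refl])
    fix b r assume "b \<in> {..<3::nat}" "r \<in> {..<8::nat}"
    hence b: "b < 3" by simp
    have "(\<Sum>b'<3. \<Sum>r'<8. y $ (8*b+r) * (if b = b' then c else 0) * y $ (8*b'+r')) =
      (\<Sum>b'<3. if b' = b then (\<Sum>r'<8. c * (y $ (8*b+r) * y $ (8*b'+r'))) else 0)"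
      by (rule sum.cong, auto simp: ac_simps)
    also have "\<dots> = (\<Sum>r'<8. c * (y $ (8*b+r) * y $ (8*b+r')))" using b by simp
    finally show "(\<Sum>b'<3. \<Sum>r'<8. y $ (8*b+r) * (if b = b' then c else 0) * y $ (8*b'+r')) =
      (\<Sum>r'<8. c * (y $ (8*b+r) * y $ (8*b+r')))" .
  qed
  also have "\<dots> = c * (\<Sum>b<3. (\<Sum>r<8. y $ (8*b+r))^2)"
  proof -
    have sq: "\<And>b. (\<Sum>r<8. y $ (8*b+r))^2 = (\<Sum>r<8. \<Sum>r'<8. y $ (8*b+r) * y $ (8*b+r'))"
      by (simp only: power2_eq_square sum_product)
    show ?thesis unfolding sq by (simp add: sum_distrib_left)
  qed
  finally have h4: "(\<Sum>i<24. \<Sum>j<24. y $ i * (if i div 8 = j div 8 then c else 0) * y $ j) = c * (\<Sum>b<3. (\<Sum>r<8. y $ (8*b+r))^2)" .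
  show ?thesis unfolding h12 h3 h4 by (simp add: right_diff_distrib)
qed

lemma elem_bounds:
  assumes y: "y \<in> carrier_vec 24" and m: "0 < m" and \<beta>: "0 \<le> \<beta>"
  shows "y \<bullet> (kron (1\<^sub>m 3) ((m / 8) \<cdot>\<^sub>m 1\<^sub>m 8) *\<^sub>v y) = m / 8 * (\<Sum>k<24. (y $ k)^2)"
    "0 \<le> y \<bullet> (kron (1\<^sub>m 3) ((\<beta> * m / 56) \<cdot>\<^sub>m (8 \<cdot>\<^sub>m 1\<^sub>m 8 - mat 8 8 (\<lambda>_. 1))) *\<^sub>v y)"
    "y \<bullet> (kron (1\<^sub>m 3) ((\<beta> * m / 56) \<cdot>\<^sub>m (8 \<cdot>\<^sub>m 1\<^sub>m 8 - mat 8 8 (\<lambda>_. 1))) *\<^sub>v y)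
       \<le> 8 / 7 * \<beta> * (y \<bullet> (kron (1\<^sub>m 3) ((m / 8) \<cdot>\<^sub>m 1\<^sub>m 8) *\<^sub>v y))"
proof -
  define S where "S = (\<Sum>k<24. (y $ k)^2)"
  define Q where "Q = (\<Sum>b<3. (\<Sum>r<8. y $ (8*b+r))^2)"
  have Q0: "0 \<le> Q" unfolding Q_def by (intro sum_nonneg, simp)
  have "Q \<le> (\<Sum>b<3. real 8 * (\<Sum>r<8. (y $ (8*b+r))^2))"
    unfolding Q_def by (intro sum_mono sum_sq_bound)
  also have "\<dots> = 8 * (\<Sum>b<3. \<Sum>r<8. (y $ (8*b+r))^2)" by (simp add: sum_distrib_left)
  also have "(\<Sum>b<3. \<Sum>r<8. (y $ (8*b+r))^2) = S"
    unfolding S_def using block_sum[where m=3 and f="\<lambda>k. (y $ k)^2"] by simp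
  finally have QS: "Q \<le> 8 * S" .
  have c0: "0 \<le> \<beta> * m / 56" using m \<beta> by simp
  show eM: "y \<bullet> (kron (1\<^sub>m 3) ((m / 8) \<cdot>\<^sub>m 1\<^sub>m 8) *\<^sub>v y) = m / 8 * (\<Sum>k<24. (y $ k)^2)"
    by (rule elemM[OF y])
  have eE: "y \<bullet> (kron (1\<^sub>m 3) ((\<beta> * m / 56) \<cdot>\<^sub>m (8 \<cdot>\<^sub>m 1\<^sub>m 8 - mat 8 8 (\<lambda>_. 1))) *\<^sub>v y) = 
     \<beta> * m / 56 * (8 * S - Q)" unfolding S_def Q_def by (rule elemE[OF y])
  show "0 \<le> y \<bullet> (kron (1\<^sub>m 3) ((\<beta> * m / 56) \<cdot>\<^sub>m (8 \<cdot>\<^sub>m 1\<^sub>m 8 - mat 8 8 (\<lambda>_. 1))) *\<^sub>v y)"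
    unfolding eE using c0 QS by simp
  have "\<beta> * m / 56 * (8 * S - Q) \<le> \<beta> * m / 56 * (8 * S)"
    using c0 Q0 by (intro mult_left_mono, auto)
  also have "\<dots> = 8 / 7 * \<beta> * (m / 8 * S)" by simp
  finally show "y \<bullet> (kron (1\<^sub>m 3) ((\<beta> * m / 56) \<cdot>\<^sub>m (8 \<cdot>\<^sub>m 1\<^sub>m 8 - mat 8 8 (\<lambda>_. 1))) *\<^sub>v y)
       \<le> 8 / 7 * \<beta> * (y \<bullet> (kron (1\<^sub>m 3) ((m / 8) \<cdot>\<^sub>m 1\<^sub>m 8) *\<^sub>v y))"
    unfolding eE eM S_def .
qed

lemma kron_sym: assumes X: "X \<in> carrier_mat 8 8" "transpose_mat X = X"
  shows "transpose_mat (kron (1\<^sub>m 3) X) = kron (1\<^sub>m 3) X"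
proof (rule eq_matI)
  have K: "kron (1\<^sub>m 3) X \<in> carrier_mat 24 24" by (rule kron_carrier[OF X(1)])
  fix i j assume "i < dim_row (kron (1\<^sub>m 3) X)" "j < dim_col (kron (1\<^sub>m 3) X)"
  hence i: "i < 24" and j: "j < 24" using K by auto
  have "i mod 8 < 8" "j mod 8 < 8" by auto
  hence "X $$ (j mod 8, i mod 8) = X $$ (i mod 8, j mod 8)"
    using X by (metis carrier_matD index_transpose_mat(1))
  thus "transpose_mat (kron (1\<^sub>m 3) X) $$ (i,j) = kron (1\<^sub>m 3) X $$ (i,j)"
    using kron_entry[OF X(1) i j] kron_entry[OF X(1) j i] K i j by auto
qed (insert kron_carrier[OF X(1)], auto)

lemma elem_carrier:
  "kron (1\<^sub>m 3) ((m / 8) \<cdot>\<^sub>m 1\<^sub>m 8) \<in> carrier_mat 24 24"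
  "kron (1\<^sub>m 3) ((\<beta> * m / 56) \<cdot>\<^sub>m (8 \<cdot>\<^sub>m 1\<^sub>m 8 - mat 8 8 (\<lambda>_. 1))) \<in> carrier_mat 24 24"
  by (rule kron_carrier, simp, rule kron_carrier, intro smult_carrier_mat minus_carrier_mat, auto)

lemma elem_sym1:
  "transpose_mat (kron (1\<^sub>m 3) ((m / 8) \<cdot>\<^sub>m 1\<^sub>m 8)) = kron (1\<^sub>m 3) ((m / 8) \<cdot>\<^sub>m 1\<^sub>m 8)"
proof -
  have X: "(m / 8) \<cdot>\<^sub>m 1\<^sub>m 8 \<in> carrier_mat 8 8" by simp
  have "transpose_mat ((m / 8) \<cdot>\<^sub>m 1\<^sub>m 8) = ((m / 8) \<cdot>\<^sub>m 1\<^sub>m 8 :: real mat)" by (rule eq_matI, auto)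
  thus ?thesis by (rule kron_sym[OF X])
qed

lemma elem_sym2:
  "transpose_mat (kron (1\<^sub>m 3) ((\<beta> * m / 56) \<cdot>\<^sub>m (8 \<cdot>\<^sub>m 1\<^sub>m 8 - mat 8 8 (\<lambda>_. 1))))
     = kron (1\<^sub>m 3) ((\<beta> * m / 56) \<cdot>\<^sub>m (8 \<cdot>\<^sub>m 1\<^sub>m 8 - mat 8 8 (\<lambda>_. 1)))"
proof -
  have X: "(\<beta> * m / 56) \<cdot>\<^sub>m (8 \<cdot>\<^sub>m 1\<^sub>m 8 - mat 8 8 (\<lambda>_. 1)) \<in> carrier_mat 8 8"
    by (intro smult_carrier_mat minus_carrier_mat, auto)
  have "transpose_mat ((\<beta> * m / 56) \<cdot>\<^sub>m (8 \<cdot>\<^sub>m 1\<^sub>m 8 - mat 8 8 (\<lambda>_. 1))) = 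
    ((\<beta> * m / 56) \<cdot>\<^sub>m (8 \<cdot>\<^sub>m 1\<^sub>m 8 - mat 8 8 (\<lambda>_. 1)) :: real mat)" by (rule eq_matI, auto)
  thus ?thesis by (rule kron_sym[OF X])
qed




lemma basis_expand:
  assumes K: "K \<in> carrier_mat n n" and A: "A \<in> carrier_mat n n"
    and es: "eigsys n K A n v l" and u: "u \<in> carrier_vec n"
  shows "u = lc n n (\<lambda>k. v k \<bullet> (A *\<^sub>v u)) v"
proof -
  define V where "V = mat n n (\<lambda>(i,j). v j $ i)"
  have Vc: "V \<in> carrier_mat n n" unfolding V_def by auto
  have vc: "\<And>j. j < n \<Longrightarrow> v j \<in> carrier_vec n" using es by (auto simp: eigsys_def)
  have colV: "col V j = v j" if "j < n" for j
    unfolding V_def using that vc[OF that] by (intro eq_vecI, auto)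
  have VAV: "(transpose_mat V * A) * V = 1\<^sub>m n"
  proof (rule eq_matI)
    fix i j assume "i < dim_row (1\<^sub>m n :: real mat)" "j < dim_col (1\<^sub>m n :: real mat)"
    hence i: "i < n" and j: "j < n" by auto
    have "(transpose_mat V * A * V) $$ (i,j) = v i \<bullet> (A *\<^sub>v v j)"
      using quad_entry[OF Vc A i j] colV[OF i] colV[OF j] by simp
    also have "\<dots> = (if i = j then 1 else 0)" using es i j unfolding eigsys_def by blast
    also have "\<dots> = (1\<^sub>m n :: real mat) $$ (i,j)" using i j by simp
    finally show "((transpose_mat V * A) * V) $$ (i,j) = (1\<^sub>m n :: real mat) $$ (i,j)" by simp
  qed (insert Vc A, auto)
  have VtA: "transpose_mat V * A \<in> carrier_mat n n" using Vc A by auto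
  have inv: "V * (transpose_mat V * A) = 1\<^sub>m n" by (rule mat_mult_left_right_inverse[OF VtA Vc VAV])
  have "u = (V * (transpose_mat V * A)) *\<^sub>v u" unfolding inv using u by simp
  also have "\<dots> = V *\<^sub>v ((transpose_mat V * A) *\<^sub>v u)" using Vc VtA u by simp
  also have "\<dots> = lc n n (\<lambda>k. v k \<bullet> (A *\<^sub>v u)) v"
  proof (rule eq_vecI)
    fix r assume "r < dim_vec (lc n n (\<lambda>k. v k \<bullet> (A *\<^sub>v u)) v)"
    hence r: "r < n" by (simp add: lc_def)
    have e: "((transpose_mat V * A) *\<^sub>v u) $ k = v k \<bullet> (A *\<^sub>v u)" if k: "k < n" for k
    proof -
      have "((transpose_mat V * A) *\<^sub>v u) $ k = (transpose_mat V *\<^sub>v (A *\<^sub>v u)) $ k" using Vc A u by simp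
      also have "\<dots> = row (transpose_mat V) k \<bullet> (A *\<^sub>v u)" using Vc k by simp
      also have "row (transpose_mat V) k = v k" using Vc k colV[OF k] by simp
      finally show ?thesis .
    qed
    have "(V *\<^sub>v ((transpose_mat V * A) *\<^sub>v u)) $ r = (\<Sum>k<n. V $$ (r,k) * ((transpose_mat V * A) *\<^sub>v u) $ k)"
      using Vc VtA u r by (auto simp: scalar_prod_def lessThan_atLeast0 intro!: sum.cong)
    also have "\<dots> = (\<Sum>k<n. (v k \<bullet> (A *\<^sub>v u)) * v k $ r)"
      using e r by (auto simp: V_def intro!: sum.cong)
    finally show "(V *\<^sub>v ((transpose_mat V * A) *\<^sub>v u)) $ r = lc n n (\<lambda>k. v k \<bullet> (A *\<^sub>v u)) v $ r"
      using r by (simp add: lc_def)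
  qed (insert Vc, auto simp: lc_def)
  finally show ?thesis .
qed

lemma one_sym_pd: "sym_pd n (1\<^sub>m n)"
proof -
  have "0 < v \<bullet> v" if "v \<in> carrier_vec n" "v \<noteq> 0\<^sub>v n" for v :: "real vec"
  proof -
    from that obtain i where i: "i < n" "v $ i \<noteq> 0" by (metis carrier_vecD eq_vecI index_zero_vec(1,2))
    have "v \<bullet> v = (\<Sum>j\<in>{0..<n}. (v $ j)^2)" using that by (simp add: scalar_prod_def power2_eq_square)
    also have "\<dots> > 0" using i by (intro sum_pos2[of _ i], auto)
    finally show ?thesis .
  qed
  thus ?thesis unfolding sym_pd_def by auto
qed

lemma rayleigh:
  assumes K: "K \<in> carrier_mat n n" and es: "eigsys n K (1\<^sub>m n) n v l" and x: "x \<in> carrier_vec n"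
    and n: "0 < n"
  shows "Min (l ` {..<n}) * (x \<bullet> x) \<le> x \<bullet> (K *\<^sub>v x)" "x \<bullet> (K *\<^sub>v x) \<le> Max (l ` {..<n}) * (x \<bullet> x)"
proof -
  define \<alpha> where "\<alpha> k = v k \<bullet> (1\<^sub>m n *\<^sub>v x)" for k
  have xe: "x = lc n n \<alpha> (\<lambda>k. v (id k))" using basis_expand[OF K one_carrier_mat es x] unfolding \<alpha>_def by simp
  have I: "1\<^sub>m n \<in> carrier_mat n n" "transpose_mat (1\<^sub>m n :: real mat) = 1\<^sub>m n" by auto
  have inj: "inj_on id {..<n}" by simp
  have P2: "x \<bullet> (1\<^sub>m n *\<^sub>v x) = (\<Sum>k<n. \<alpha> k ^ 2)"
    by (subst (1 2) xe, rule parseval(2)[OF K I es inj], auto)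
  have P3: "x \<bullet> (K *\<^sub>v x) = (\<Sum>k<n. l k * \<alpha> k ^ 2)"
  proof -
    have "lc n n \<alpha> (\<lambda>k. v (id k)) \<bullet> (K *\<^sub>v lc n n \<alpha> (\<lambda>k. v (id k))) = (\<Sum>k<n. l (id k) * \<alpha> k ^ 2)"
      by (rule parseval(3)[OF K I es inj], auto)
    thus ?thesis using xe by simp
  qed
  have xx: "x \<bullet> x = (\<Sum>k<n. \<alpha> k ^ 2)" using P2 x by simp
  have fin: "finite (l ` {..<n})" "l ` {..<n} \<noteq> {}" using n by auto
  have "(\<Sum>k<n. Min (l ` {..<n}) * \<alpha> k ^ 2) \<le> (\<Sum>k<n. l k * \<alpha> k ^ 2)"
    by (intro sum_mono mult_right_mono, auto intro: Min_le[OF fin(1)])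
  thus "Min (l ` {..<n}) * (x \<bullet> x) \<le> x \<bullet> (K *\<^sub>v x)" unfolding P3 xx by (simp add: sum_distrib_left)
  have "(\<Sum>k<n. l k * \<alpha> k ^ 2) \<le> (\<Sum>k<n. Max (l ` {..<n}) * \<alpha> k ^ 2)"
    by (intro sum_mono mult_right_mono, auto intro: Max_ge[OF fin(1)])
  thus "x \<bullet> (K *\<^sub>v x) \<le> Max (l ` {..<n}) * (x \<bullet> x)" unfolding P3 xx by (simp add: sum_distrib_left)
qed

lemma spectrum_eigsys:
  assumes K: "K \<in> carrier_mat n n" and es: "eigsys n K (1\<^sub>m n) n v l"
  shows "spectrum K = l ` {..<n}"
proof
  have vc: "\<And>j. j < n \<Longrightarrow> v j \<in> carrier_vec n" using es by (auto simp: eigsys_def)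
  show "l ` {..<n} \<subseteq> spectrum K"
  proof
    fix ev assume "ev \<in> l ` {..<n}"
    then obtain j where j: "j < n" "ev = l j" by auto
    have "v j \<bullet> (1\<^sub>m n *\<^sub>v v j) = 1" using es j(1) by (auto simp: eigsys_def)
    hence "v j \<noteq> 0\<^sub>v n" using vc[OF j(1)] by auto
    moreover have "K *\<^sub>v v j = l j \<cdot>\<^sub>v v j" using es j(1) vc[OF j(1)] by (auto simp: eigsys_def)
    ultimately have "eigenvector K (v j) (l j)" unfolding eigenvector_def using K vc[OF j(1)] by auto
    thus "ev \<in> spectrum K" unfolding spectrum_def eigenvalue_def j by auto
  qed
  show "spectrum K \<subseteq> l ` {..<n}"
  proof
    fix ev assume "ev \<in> spectrum K"
    then obtain u where u: "u \<in> carrier_vec n" "u \<noteq> 0\<^sub>v n" "K *\<^sub>v u = ev \<cdot>\<^sub>v u"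
      unfolding spectrum_def eigenvalue_def eigenvector_def using K by auto
    define \<alpha> where "\<alpha> k = v k \<bullet> (1\<^sub>m n *\<^sub>v u)" for k
    have ue: "u = lc n n \<alpha> (\<lambda>k. v (id k))" using basis_expand[OF K one_carrier_mat es u(1)] unfolding \<alpha>_def by simp
    have I: "1\<^sub>m n \<in> carrier_mat n n" "transpose_mat (1\<^sub>m n :: real mat) = 1\<^sub>m n" by auto
    have inj: "inj_on id {..<n}" by simp
    obtain j where j: "j < n" "\<alpha> j \<noteq> 0"
    proof (rule ccontr)
      assume "\<not> thesis"
      hence "\<And>j. j < n \<Longrightarrow> \<alpha> j = 0" using that by blast
      hence "lc n n \<alpha> (\<lambda>k. v (id k)) = 0\<^sub>v n" unfolding lc_def by (intro eq_vecI, auto)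
      with ue u(2) show False by simp
    qed
    have lcv: "\<And>k. k < n \<Longrightarrow> v (id k) \<in> carrier_vec n" using vc by simp
    have Kv: "K *\<^sub>v v k = l k \<cdot>\<^sub>v v k" if "k < n" for k using es that vc[OF that] by (auto simp: eigsys_def)
    have e1: "K *\<^sub>v u = lc n n (\<lambda>k. l k * \<alpha> k) (\<lambda>k. v (id k))"
    proof -
      have "K *\<^sub>v u = lc n n \<alpha> (\<lambda>k. K *\<^sub>v v (id k))" by (subst ue, rule lc_mult[OF K lcv])
      also have "\<dots> = lc n n (\<lambda>k. l k * \<alpha> k) (\<lambda>k. v (id k))"
        unfolding lc_def
      proof (rule eq_vecI)
        fix r assume "r < dim_vec (vec n (\<lambda>r. \<Sum>k<n. l k * \<alpha> k * v (id k) $ r))"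
        hence r: "r < n" by simp
        have "(\<Sum>k<n. \<alpha> k * (K *\<^sub>v v (id k)) $ r) = (\<Sum>k<n. l k * \<alpha> k * v (id k) $ r)"
        proof (rule sum.cong[OF refl])
          fix k assume "k \<in> {..<n}"
          hence k: "k < n" by simp
          show "\<alpha> k * (K *\<^sub>v v (id k)) $ r = l k * \<alpha> k * v (id k) $ r"
            using Kv[OF k] vc[OF k] r by simp
        qed
        thus "vec n (\<lambda>r. \<Sum>k<n. \<alpha> k * (K *\<^sub>v v (id k)) $ r) $ r = vec n (\<lambda>r. \<Sum>k<n. l k * \<alpha> k * v (id k) $ r) $ r"
          using r by simp
      qed simp
      finally show ?thesis .
    qed
    have e2: "ev \<cdot>\<^sub>v u = lc n n (\<lambda>k. ev * \<alpha> k) (\<lambda>k. v (id k))"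
      by (subst ue, unfold lc_def, intro eq_vecI, auto simp: sum_distrib_left ac_simps)
    have "l j * \<alpha> j = v (id j) \<bullet> (1\<^sub>m n *\<^sub>v lc n n (\<lambda>k. l k * \<alpha> k) (\<lambda>k. v (id k)))"
      by (rule parseval(1)[OF K I es inj _ j(1), symmetric], simp)
    also have "\<dots> = v (id j) \<bullet> (1\<^sub>m n *\<^sub>v lc n n (\<lambda>k. ev * \<alpha> k) (\<lambda>k. v (id k)))"
      using e1 e2 u(3) by simp
    also have "\<dots> = ev * \<alpha> j"
      by (rule parseval(1)[OF K I es inj _ j(1)], simp)
    finally have "l j = ev" using j(2) by simp
    thus "ev \<in> l ` {..<n}" using j by auto
  qed
qed

lemma eig_val:
  assumes A: "A \<in> carrier_mat n n" and es: "eigsys n K A k v l" and j: "j < k"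
  shows "v j \<bullet> (K *\<^sub>v v j) = l j" "v j \<noteq> 0\<^sub>v n" "v j \<in> carrier_vec n"
proof -
  have vc: "v j \<in> carrier_vec n" and Kv: "K *\<^sub>v v j = l j \<cdot>\<^sub>v (A *\<^sub>v v j)"
    and one: "v j \<bullet> (A *\<^sub>v v j) = 1" using es j by (auto simp: eigsys_def)
  show "v j \<in> carrier_vec n" by fact
  show "v j \<bullet> (K *\<^sub>v v j) = l j" unfolding Kv using vc A one by simp
  show "v j \<noteq> 0\<^sub>v n"
  proof
    assume "v j = 0\<^sub>v n"
    with one A show False by simp
  qed
qed

lemma eig_pos:
  assumes K: "sym_pd n K" and A: "A \<in> carrier_mat n n" and es: "eigsys n K A k v l" and j: "j < k"
  shows "0 < l j"
  using eig_val[OF A es j] K unfolding sym_pd_def by metis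

lemma abstract_main:
  fixes c :: real
  assumes K: "sym_pd n K" and M: "sym_pd n M" and Mb: "sym_pd n Mbar" and c: "0 \<le> c"
    and lo: "\<And>x. x \<in> carrier_vec n \<Longrightarrow> x \<bullet> (M *\<^sub>v x) \<le> x \<bullet> (Mbar *\<^sub>v x)"
    and hi: "\<And>x. x \<in> carrier_vec n \<Longrightarrow> x \<bullet> (Mbar *\<^sub>v x) \<le> (1 + c) * (x \<bullet> (M *\<^sub>v x))"
  shows "(\<forall>i\<in>{1..n}. 1 \<le> sqrt (gen_eig K M i) / sqrt (gen_eig K Mbar i) \<and>
            sqrt (gen_eig K M i) / sqrt (gen_eig K Mbar i) \<le> sqrt (1 + c))
         \<and> cond Mbar / cond M \<le> 1 + c"
proof -
  have Kc: "K \<in> carrier_mat n n" "transpose_mat K = K" using K by (auto simp: sym_pd_def)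
  have Mc: "M \<in> carrier_mat n n" "transpose_mat M = M" using M by (auto simp: sym_pd_def)
  have Mbc: "Mbar \<in> carrier_mat n n" "transpose_mat Mbar = Mbar" using Mb by (auto simp: sym_pd_def)
  obtain vM lM where esM: "eigsys n K M n vM lM" using eigsys_exists[OF Kc M, of n] by auto
  obtain vB lB where esB: "eigsys n K Mbar n vB lB" using eigsys_exists[OF Kc Mb, of n] by auto
  have lMp: "\<And>j. j < n \<Longrightarrow> 0 < lM j" by (rule eig_pos[OF K Mc(1) esM])
  have lBp: "\<And>j. j < n \<Longrightarrow> 0 < lB j" by (rule eig_pos[OF K Mbc(1) esB])
  have part1: "1 \<le> sqrt (gen_eig K M i) / sqrt (gen_eig K Mbar i) \<and>
            sqrt (gen_eig K M i) / sqrt (gen_eig K Mbar i) \<le> sqrt (1 + c)" if i: "i \<in> {1..n}" for i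
  proof -
    have i1: "1 \<le> i" "i \<le> n" using i by auto
    define a where "a = gen_eig K M i"
    define b where "b = gen_eig K Mbar i"
    have a: "a = sort (map lM [0..<n]) ! (i - 1)" unfolding a_def by (rule gen_eig_eigsys[OF Kc(1) M esM])
    have b: "b = sort (map lB [0..<n]) ! (i - 1)" unfolding b_def by (rule gen_eig_eigsys[OF Kc(1) Mb esB])
    have ba: "b \<le> 1 * a" unfolding a b
      by (rule eig_compare[OF Kc(1) M Mb esM esB _ _ i1], insert lMp lo, auto simp: less_imp_le)
    have ab: "a \<le> (1 + c) * b" unfolding a b
      by (rule eig_compare[OF Kc(1) Mb M esB esM _ _ i1], insert lBp hi, auto simp: less_imp_le)
    have "b \<in> set (sort (map lB [0..<n]))" unfolding b using i1 by (intro nth_mem, auto)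
    then obtain j where "j < n" "b = lB j" by auto
    hence b0: "0 < b" using lBp by auto
    have "sqrt b \<le> sqrt a" using ba by simp
    hence r1: "1 \<le> sqrt a / sqrt b" using b0 by simp
    have "sqrt a \<le> sqrt ((1 + c) * b)" using ab by simp
    also have "\<dots> = sqrt (1 + c) * sqrt b" by (simp add: real_sqrt_mult)
    finally have r2: "sqrt a / sqrt b \<le> sqrt (1 + c)" using b0 by (simp add: divide_le_eq)
    show ?thesis using r1 r2 unfolding a_def b_def by simp
  qed
  have part2: "cond Mbar / cond M \<le> 1 + c"
  proof (cases "n = 0")
    case True
    have "Mbar = M" using Mc(1) Mbc(1) True by (intro eq_matI, auto)
    hence "cond Mbar / cond M \<le> 1" by (cases "cond M = 0", auto)
    thus ?thesis using c by simp
  next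
    case False
    hence n: "0 < n" by simp
    obtain vm lm where esm: "eigsys n M (1\<^sub>m n) n vm lm"
      using eigsys_exists[OF Mc one_sym_pd, of n] by auto
    obtain vb lb where esb: "eigsys n Mbar (1\<^sub>m n) n vb lb"
      using eigsys_exists[OF Mbc one_sym_pd, of n] by auto
    have sM: "spectrum M = lm ` {..<n}" by (rule spectrum_eigsys[OF Mc(1) esm])
    have sB: "spectrum Mbar = lb ` {..<n}" by (rule spectrum_eigsys[OF Mbc(1) esb])
    have I: "1\<^sub>m n \<in> carrier_mat n n" by simp
    define mx where "mx = Max (lm ` {..<n})"
    define mn where "mn = Min (lm ` {..<n})"
    have fin: "finite (lm ` {..<n})" "lm ` {..<n} \<noteq> {}" "finite (lb ` {..<n})" "lb ` {..<n} \<noteq> {}"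
      using n by auto
    have mn0: "0 < mn" unfolding mn_def using fin eig_pos[OF M I esm] by (subst Min_gr_iff, auto)
    have mnmx: "mn \<le> mx" unfolding mn_def mx_def using fin by (meson Max_ge Min_le_iff Min_in)
    have lb_bounds: "mn \<le> lb j \<and> lb j \<le> (1 + c) * mx" if j: "j < n" for j
    proof -
      note ev = eig_val[OF I esb j]
      have vv: "vb j \<bullet> vb j = 1" using esb j by (auto simp: eigsys_def)
      have "lb j = vb j \<bullet> (Mbar *\<^sub>v vb j)" using ev(1) by simp
      moreover have "mn \<le> vb j \<bullet> (M *\<^sub>v vb j)"
        using rayleigh(1)[OF Mc(1) esm ev(3) n] vv unfolding mn_def by simp
      moreover have "vb j \<bullet> (M *\<^sub>v vb j) \<le> mx"
        using rayleigh(2)[OF Mc(1) esm ev(3) n] vv unfolding mx_def by simp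
      moreover note lo[OF ev(3)] hi[OF ev(3)]
      ultimately show ?thesis using c by (smt (verit) mult_left_mono)
    qed
    have Mxb: "Max (lb ` {..<n}) \<le> (1 + c) * mx" using fin lb_bounds by (subst Max_le_iff, auto)
    have Mnb: "mn \<le> Min (lb ` {..<n})" using fin lb_bounds by (subst Min_ge_iff, auto)
    have "cond Mbar = Max (lb ` {..<n}) / Min (lb ` {..<n})" unfolding cond_def sB ..
    also have "\<dots> \<le> (1 + c) * mx / mn"
      by (rule frac_le, insert mn0 mnmx c Mxb Mnb, auto)
    finally have cb: "cond Mbar \<le> (1 + c) * mx / mn" .
    have cm: "cond M = mx / mn" unfolding cond_def sM mx_def mn_def ..
    have cm0: "0 < cond M" unfolding cm using mn0 mnmx by simp
    have "cond Mbar / cond M \<le> ((1 + c) * mx / mn) / cond M" by (rule divide_right_mono[OF cb], insert cm0, simp)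
    also have "\<dots> = 1 + c" unfolding cm using mn0 mnmx by simp
    finally show ?thesis .
  qed
  show ?thesis using part1 part2 by blast
qed

theorem mainTheorem6:
  fixes n N :: nat and idx :: "nat \<Rightarrow> nat \<Rightarrow> nat" and Ke :: "nat \<Rightarrow> real mat"
    and mass :: "nat \<Rightarrow> real" and \<beta> :: real
  defines "K \<equiv> assemble n N (\<lambda>e. bool_mat 24 n (idx e)) Ke"
    and "M \<equiv> assemble n N (\<lambda>e. bool_mat 24 n (idx e)) (\<lambda>e. kron (1\<^sub>m 3) ((mass e / 8) \<cdot>\<^sub>m 1\<^sub>m 8))"
    and "Mbar \<equiv> assemble n N (\<lambda>e. bool_mat 24 n (idx e)) (\<lambda>e. (\<lambda>e. kron (1\<^sub>m 3) ((mass e / 8) \<cdot>\<^sub>m 1\<^sub>m 8)) e + (\<lambda>e. kron (1\<^sub>m 3) ((\<beta> * mass e / 56) \<cdot>\<^sub>m (8 \<cdot>\<^sub>m 1\<^sub>m 8 - mat 8 8 (\<lambda>_. 1)))) e)"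
  assumes idx_range: "\<And>e k. e < N \<Longrightarrow> k < 24 \<Longrightarrow> idx e k < n"
    and idx_inj: "\<And>e. e < N \<Longrightarrow> inj_on (idx e) {..<24}"
    and idx_cover: "\<And>j. j < n \<Longrightarrow> \<exists>e<N. \<exists>k<24. idx e k = j"
    and Ke_psd: "\<And>e. e < N \<Longrightarrow> sym_psd 24 (Ke e)"
    and K_pd: "sym_pd n K"
    and mass_pos: "\<And>e. e < N \<Longrightarrow> mass e > 0"
    and beta_nonneg: "\<beta> \<ge> 0"
  shows "(\<forall>i \<in> {1..n}.
            1 \<le> sqrt (gen_eig K M i) / sqrt (gen_eig K Mbar i) \<and>
            sqrt (gen_eig K M i) / sqrt (gen_eig K Mbar i) \<le> sqrt (1 + 8 / 7 * \<beta>))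
         \<and> cond Mbar / cond M \<le> 1 + 8 / 7 * \<beta>"
proof -
  define L where "L e = bool_mat 24 n (idx e)" for e
  define Me where "Me e = kron (1\<^sub>m 3) ((mass e / 8) \<cdot>\<^sub>m 1\<^sub>m 8)" for e
  define Ee where "Ee e = kron (1\<^sub>m 3) ((\<beta> * mass e / 56) \<cdot>\<^sub>m (8 \<cdot>\<^sub>m 1\<^sub>m 8 - mat 8 8 (\<lambda>_. 1)))" for e
  have Mdef: "M = assemble n N L Me" unfolding M_def L_def Me_def ..
  have Mbdef: "Mbar = assemble n N L (\<lambda>e. Me e + Ee e)" unfolding Mbar_def L_def Me_def Ee_def by simp
  have Lc: "\<And>e. e < N \<Longrightarrow> L e \<in> carrier_mat 24 n" unfolding L_def by simp
  have Mec: "\<And>e. Me e \<in> carrier_mat 24 24" unfolding Me_def by (rule elem_carrier(1))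
  have Eec: "\<And>e. Ee e \<in> carrier_mat 24 24" unfolding Ee_def by (rule elem_carrier(2))
  have MEc: "\<And>e. Me e + Ee e \<in> carrier_mat 24 24" using Mec Eec by (meson add_carrier_mat)
  have Mes: "\<And>e. transpose_mat (Me e) = Me e" unfolding Me_def by (rule elem_sym1)
  have Ees: "\<And>e. transpose_mat (Ee e) = Ee e" unfolding Ee_def by (rule elem_sym2)
  have MEs: "\<And>e. transpose_mat (Me e + Ee e) = Me e + Ee e"
    using Mes Ees Mec Eec by (metis transpose_add)
  have MecN: "\<And>e. e < N \<Longrightarrow> Me e \<in> carrier_mat 24 24" using Mec by auto
  have MEcN: "\<And>e. e < N \<Longrightarrow> Me e + Ee e \<in> carrier_mat 24 24" using MEc by auto
  have MesN: "\<And>e. e < N \<Longrightarrow> transpose_mat (Me e) = Me e" using Mes by auto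
  have MEsN: "\<And>e. e < N \<Longrightarrow> transpose_mat (Me e + Ee e) = Me e + Ee e" using MEs by auto
  define y where "y (x :: real vec) e = vec 24 (\<lambda>k. x $ idx e k)" for x e
  have Ly: "L e *\<^sub>v x = y x e" if "e < N" "x \<in> carrier_vec n" for e x
    unfolding L_def y_def by (rule bool_mat_apply[OF that(2)], rule idx_range[OF that(1)])
  have yc: "y x e \<in> carrier_vec 24" for x e unfolding y_def by simp
  have qM: "x \<bullet> (M *\<^sub>v x) = (\<Sum>e<N. y x e \<bullet> (Me e *\<^sub>v y x e))" if x: "x \<in> carrier_vec n" for x
  proof -
    have "x \<bullet> (M *\<^sub>v x) = (\<Sum>e<N. (L e *\<^sub>v x) \<bullet> (Me e *\<^sub>v (L e *\<^sub>v x)))"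
      unfolding Mdef by (rule assemble_quad[OF Lc MecN x])
    also have "\<dots> = (\<Sum>e<N. y x e \<bullet> (Me e *\<^sub>v y x e))" using Ly x by (intro sum.cong refl, auto)
    finally show ?thesis .
  qed
  have qMb: "x \<bullet> (Mbar *\<^sub>v x) = (\<Sum>e<N. y x e \<bullet> (Me e *\<^sub>v y x e) + y x e \<bullet> (Ee e *\<^sub>v y x e))"
    if x: "x \<in> carrier_vec n" for x
  proof -
    have "x \<bullet> (Mbar *\<^sub>v x) = (\<Sum>e<N. (L e *\<^sub>v x) \<bullet> ((Me e + Ee e) *\<^sub>v (L e *\<^sub>v x)))"
      unfolding Mbdef by (rule assemble_quad[OF Lc MEcN x])
    also have "\<dots> = (\<Sum>e<N. y x e \<bullet> (Me e *\<^sub>v y x e) + y x e \<bullet> (Ee e *\<^sub>v y x e))"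
    proof (rule sum.cong[OF refl])
      fix e assume "e \<in> {..<N}"
      hence e: "e < N" by simp
      have a: "(Me e + Ee e) *\<^sub>v y x e = Me e *\<^sub>v y x e + Ee e *\<^sub>v y x e"
        by (rule add_mult_distrib_mat_vec[OF Mec Eec yc])
      have b: "y x e \<bullet> (Me e *\<^sub>v y x e + Ee e *\<^sub>v y x e) = y x e \<bullet> (Me e *\<^sub>v y x e) + y x e \<bullet> (Ee e *\<^sub>v y x e)"
        by (rule scalar_prod_add_distrib[of _ 24], insert yc mult_mat_vec_carrier[OF Mec yc] mult_mat_vec_carrier[OF Eec yc], auto)
      show "(L e *\<^sub>v x) \<bullet> ((Me e + Ee e) *\<^sub>v (L e *\<^sub>v x)) = y x e \<bullet> (Me e *\<^sub>v y x e) + y x e \<bullet> (Ee e *\<^sub>v y x e)"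
        unfolding Ly[OF e x] a b ..
    qed
    finally show ?thesis .
  qed
  have eb: "0 \<le> y x e \<bullet> (Ee e *\<^sub>v y x e) \<and> y x e \<bullet> (Ee e *\<^sub>v y x e) \<le> 8 / 7 * \<beta> * (y x e \<bullet> (Me e *\<^sub>v y x e))"
    if e: "e < N" for x :: "real vec" and e
    using elem_bounds(2,3)[OF yc mass_pos[OF e] beta_nonneg] unfolding Me_def Ee_def by simp
  have eM: "y x e \<bullet> (Me e *\<^sub>v y x e) = mass e / 8 * (\<Sum>k<24. (x $ idx e k)^2)" for x :: "real vec" and e
  proof -
    have "y x e \<bullet> (Me e *\<^sub>v y x e) = mass e / 8 * (\<Sum>k<24. (y x e $ k)^2)"
      unfolding Me_def by (rule elemM[OF yc])
    also have "(\<Sum>k<24. (y x e $ k)^2) = (\<Sum>k<24. (x $ idx e k)^2)"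
      unfolding y_def by (rule sum.cong, auto)
    finally show ?thesis .
  qed
  have lo: "x \<bullet> (M *\<^sub>v x) \<le> x \<bullet> (Mbar *\<^sub>v x)" if x: "x \<in> carrier_vec n" for x
    unfolding qM[OF x] qMb[OF x] using eb by (intro sum_mono, auto)
  have hi: "x \<bullet> (Mbar *\<^sub>v x) \<le> (1 + 8 / 7 * \<beta>) * (x \<bullet> (M *\<^sub>v x))" if x: "x \<in> carrier_vec n" for x
    unfolding qM[OF x] qMb[OF x] sum_distrib_left using eb by (intro sum_mono, auto simp: algebra_simps)
  have Mpd: "sym_pd n M"
    unfolding sym_pd_def
  proof (intro conjI ballI impI)
    show "M \<in> carrier_mat n n" unfolding Mdef by simp
    show "transpose_mat M = M" unfolding Mdef by (rule assemble_sym[OF Lc MecN MesN])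
    fix x :: "real vec" assume x: "x \<in> carrier_vec n" and x0: "x \<noteq> 0\<^sub>v n"
    from x x0 obtain j where j: "j < n" "x $ j \<noteq> 0" by (metis carrier_vecD eq_vecI index_zero_vec(1,2))
    from idx_cover[OF j(1)] obtain e k where ek: "e < N" "k < 24" "idx e k = j" by auto
    have "0 < (\<Sum>e<N. mass e / 8 * (\<Sum>k<24. (x $ idx e k)^2))"
    proof (rule sum_pos2[of _ e])
      show "0 < mass e / 8 * (\<Sum>k<24. (x $ idx e k)^2)"
        using mass_pos[OF ek(1)] ek j by (intro mult_pos_pos sum_pos2[of _ k], auto)
      show "\<And>i. i \<in> {..<N} \<Longrightarrow> 0 \<le> mass i / 8 * (\<Sum>k<24. (x $ idx i k)^2)"
        using mass_pos by (intro mult_nonneg_nonneg sum_nonneg, auto simp: less_imp_le)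
    qed (insert ek, auto)
    thus "0 < x \<bullet> (M *\<^sub>v x)" unfolding qM[OF x] eM .
  qed
  have Mbpd: "sym_pd n Mbar"
    unfolding sym_pd_def
  proof (intro conjI ballI impI)
    show "Mbar \<in> carrier_mat n n" unfolding Mbdef by simp
    show "transpose_mat Mbar = Mbar" unfolding Mbdef by (rule assemble_sym[OF Lc MEcN MEsN])
    fix x :: "real vec" assume x: "x \<in> carrier_vec n" and x0: "x \<noteq> 0\<^sub>v n"
    have "0 < x \<bullet> (M *\<^sub>v x)" using Mpd x x0 unfolding sym_pd_def by auto
    thus "0 < x \<bullet> (Mbar *\<^sub>v x)" using lo[OF x] by simp
  qed
  have c: "0 \<le> 8 / 7 * \<beta>" using beta_nonneg by simp
  show ?thesis by (rule abstract_main[OF K_pd Mpd Mbpd c lo hi])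
qed



end
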